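(* Let $n\ge 2$. For a partition $\lambda$ of $n$, let $u_\lambda$ be the number of unrooted binary trees with leaf set $[n]$ fixed by the relabeling action of a permutation $\sigma\in\mathfrak{S}_n$ of cycle type $\lambda$ (equivalently, $u_\lambda$ is the coefficient of $p_\lambda/z_\lambda$ in $Z_U=h_3[Z_R]+p_1Z_R+Z_R-Z_R^2-p_1$), let $\lambda^2$ be the cycle type of $\sigma^2$, and let $z_\lambda=\prod_{i\ge1}i^{m_i}m_i!$ where $m_i$ is the number of parts of $\lambda$ equal to $i$. Then the number of unlabeled unrooted tanglegrams with $n$ leaves is $\sum_{\lambda\vdash n} u_\lambda^2/z_\lambda$, and the number of unlabeled unrooted unordered tanglegrams with $n$ leaves is \[ \frac12\sum_{\lambda\vdash n}\frac{u_\lambda^2}{z_\lambda}+\frac12\sum_{\lambda\vdash n}\frac{u_{\lambda^2}}{z_\lambda}. \]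
   Context: An unrooted binary tree with leaf set $A$ is a tree in which every vertex has degree one or three, whose leaves (degree-one vertices) are labeled bijectively by $A$ and whose degree-three vertices are unlabeled; the one-vertex tree is excluded; trees are considered up to label-preserving isomorphism. A (rooted) binary tree with leaf set $A$ is a rooted tree in which every vertex has zero or two unordered children, with leaves labeled bijectively by $A$ and internal vertices unlabeled (the single labeled vertex counts). $\mathfrak{S}_n$ acts on trees with leaf set $[n]$ by relabeling leaves. An unrooted tanglegram with leaf set $[n]$ is an ordered pair of unrooted binary trees with leaf set $[n]$; an unrooted unordered tanglegram is an unordered pair (multiset of size two) of such trees. $\mathfrak{S}_n$ acts on both by relabeling the two trees simultaneously, and the unlabeled objects with $n$ leaves are the orbits. Cycle index of a species $F$: $Z_F=\sum_{n\ge0}\frac1{n!}\sum_{\sigma\in\mathfrak{S}_n}\mathrm{fix}\,F[\sigma]\,p_\sigma$ with $p_\sigma=\prod_i p_i^{\sigma_i}$, $\sigma_i$ the number of $i$-cycles; $Z_R$, $Z_U$ are the cycle indices of rooted and unrooted binary trees; $h_3=\tfrac16(p_1^3+3p_1p_2+2p_3)$; plethysm $f[g]$ replaces each $p_i$ in $f$ by $g(p_i,p_{2i},\dots)$. *)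

theory Defs
  imports Complex_Main "HOL-Combinatorics.Permutations" "HOL-Library.Multiset"
begin

text \<open>Leaf labelled i (for i in {1..n}) is the vertex named i; internal vertices are
  vertices with names outside {1..n} (unlabelled: only relevant up to isomorphism).\<close>

type_synonym graph = "nat set \<times> nat set set"

definition deg :: "graph \<Rightarrow> nat \<Rightarrow> nat" where
  "deg G v = card {e \<in> snd G. v \<in> e}"

definition connected_graph :: "graph \<Rightarrow> bool" where
  "connected_graph G = (\<forall>u\<in>fst G. \<forall>v\<in>fst G. (u, v) \<in> {(x, y). {x, y} \<in> snd G}\<^sup>*)"

definition is_ubtree :: "nat \<Rightarrow> graph \<Rightarrow> bool" where
  "is_ubtree n G \<longleftrightarrow>
     finite (fst G) \<and> card (fst G) \<ge> 2 \<and>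
     snd G \<subseteq> {e. \<exists>u v. e = {u, v} \<and> u \<noteq> v \<and> u \<in> fst G \<and> v \<in> fst G} \<and>
     connected_graph G \<and> card (snd G) + 1 = card (fst G) \<and>
     {1..n} \<subseteq> fst G \<and>
     (\<forall>v\<in>fst G. (v \<in> {1..n} \<longrightarrow> deg G v = 1) \<and> (v \<notin> {1..n} \<longrightarrow> deg G v = 3))"

definition ubtrees :: "nat \<Rightarrow> graph set" where
  "ubtrees n = {G. is_ubtree n G}"

definition leaf_iso :: "nat \<Rightarrow> graph \<Rightarrow> graph \<Rightarrow> bool" where
  "leaf_iso n G H \<longleftrightarrow> (\<exists>f. bij_betw f (fst G) (fst H) \<and> (\<forall>i\<in>{1..n}. f i = i) \<and>
       snd H = (\<lambda>e. f ` e) ` snd G)"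

definition iso_rel :: "nat \<Rightarrow> (graph \<times> graph) set" where
  "iso_rel n = {(G, H). G \<in> ubtrees n \<and> H \<in> ubtrees n \<and> leaf_iso n G H}"

definition UT :: "nat \<Rightarrow> graph set set" where
  "UT n = ubtrees n // iso_rel n"

text \<open>Relabelling by a permutation sigma of {1..n} (sigma permutes {1..n}, so it is the
  identity on internal vertex names).\<close>
definition relabel :: "(nat \<Rightarrow> nat) \<Rightarrow> graph \<Rightarrow> graph" where
  "relabel \<sigma> G = (\<sigma> ` fst G, (\<lambda>e. \<sigma> ` e) ` snd G)"

definition fix_count :: "nat \<Rightarrow> (nat \<Rightarrow> nat) \<Rightarrow> nat" where
  "fix_count n \<sigma> = card {C \<in> UT n. \<forall>G\<in>C. relabel \<sigma> G \<in> C}"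

definition perm_orbit :: "(nat \<Rightarrow> nat) \<Rightarrow> nat \<Rightarrow> nat set" where
  "perm_orbit \<sigma> x = {(\<sigma> ^^ k) x | k. True}"

definition cycle_type :: "nat \<Rightarrow> (nat \<Rightarrow> nat) \<Rightarrow> nat multiset" where
  "cycle_type n \<sigma> = image_mset card (mset_set (perm_orbit \<sigma> ` {1..n}))"

definition partitions :: "nat \<Rightarrow> nat multiset set" where
  "partitions n = {lam. (\<forall>i\<in>#lam. i > 0) \<and> sum_mset lam = n}"

definition perm_of_type :: "nat \<Rightarrow> nat multiset \<Rightarrow> (nat \<Rightarrow> nat)" where
  "perm_of_type n lam = (SOME \<sigma>. \<sigma> permutes {1..n} \<and> cycle_type n \<sigma> = lam)"

definition u_num :: "nat \<Rightarrow> nat multiset \<Rightarrow> nat" where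
  "u_num n lam = fix_count n (perm_of_type n lam)"

definition sq_type :: "nat \<Rightarrow> nat multiset \<Rightarrow> nat multiset" where
  "sq_type n lam = cycle_type n (perm_of_type n lam \<circ> perm_of_type n lam)"

definition z_num :: "nat multiset \<Rightarrow> nat" where
  "z_num lam = (\<Prod>i\<in>set_mset lam. i ^ count lam i * fact (count lam i))"

definition tangle_rel :: "nat \<Rightarrow> ((graph \<times> graph) \<times> (graph \<times> graph)) set" where
  "tangle_rel n = {((G1, G2), (H1, H2)). G1 \<in> ubtrees n \<and> G2 \<in> ubtrees n \<and>
      H1 \<in> ubtrees n \<and> H2 \<in> ubtrees n \<and>
      (\<exists>\<sigma>. \<sigma> permutes {1..n} \<and> leaf_iso n (relabel \<sigma> G1) H1 \<and> leaf_iso n (relabel \<sigma> G2) H2)}"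

definition unordered_tangle_rel :: "nat \<Rightarrow> ((graph \<times> graph) \<times> (graph \<times> graph)) set" where
  "unordered_tangle_rel n = {((G1, G2), (H1, H2)). G1 \<in> ubtrees n \<and> G2 \<in> ubtrees n \<and>
      H1 \<in> ubtrees n \<and> H2 \<in> ubtrees n \<and>
      (\<exists>\<sigma>. \<sigma> permutes {1..n} \<and>
        ((leaf_iso n (relabel \<sigma> G1) H1 \<and> leaf_iso n (relabel \<sigma> G2) H2) \<or>
         (leaf_iso n (relabel \<sigma> G1) H2 \<and> leaf_iso n (relabel \<sigma> G2) H1)))}"

definition num_tanglegrams :: "nat \<Rightarrow> nat" where
  "num_tanglegrams n = card ((ubtrees n \<times> ubtrees n) // tangle_rel n)"

definition num_unordered_tanglegrams :: "nat \<Rightarrow> nat" where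
  "num_unordered_tanglegrams n = card ((ubtrees n \<times> ubtrees n) // unordered_tangle_rel n)"

end

theory Submission
  imports Defs "HOL-Combinatorics.Cycles" "HOL-Algebra.Group_Action" "HOL-Algebra.Sym_Groups"
begin


definition ctype :: "nat set \<Rightarrow> (nat \<Rightarrow> nat) \<Rightarrow> nat multiset" where
  "ctype A \<sigma> = image_mset card (mset_set (perm_orbit \<sigma> ` A))"

lemma cycle_type_ctype: "cycle_type n \<sigma> = ctype {1..n} \<sigma>"
  by (simp add: cycle_type_def ctype_def)

lemma orb_self: "x \<in> perm_orbit \<sigma> x"
  unfolding perm_orbit_def by (auto intro: exI[of _ 0])

lemma orb_funpow: "(\<sigma>^^k) x \<in> perm_orbit \<sigma> x"
  unfolding perm_orbit_def by auto

lemma funpow_in: assumes "\<sigma> permutes A" "x \<in> A" shows "(\<sigma>^^k) x \<in> A"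
  using permutes_in_image[OF permutes_funpow[OF assms(1), of k]] assms(2) by simp

lemma funpow_out: assumes "\<sigma> permutes A" "x \<notin> A" shows "(\<sigma>^^k) x = x"
proof (induct k)
  case (Suc k)
  have "\<sigma> x = x" using permutes_not_in[OF assms] .
  thus ?case using Suc by simp
qed simp

lemma orb_sub: assumes "\<sigma> permutes A" "x \<in> A" shows "perm_orbit \<sigma> x \<subseteq> A"
  unfolding perm_orbit_def using funpow_in[OF assms] by auto

lemma orb_out: assumes "\<sigma> permutes A" "x \<notin> A" shows "perm_orbit \<sigma> x = {x}"
  unfolding perm_orbit_def using funpow_out[OF assms] by (auto intro: exI[of _ 0])

lemma orb_finite: "\<sigma> permutes A \<Longrightarrow> finite A \<Longrightarrow> finite (perm_orbit \<sigma> x)"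
proof (cases "x \<in> A")
  case True
  assume "\<sigma> permutes A" "finite A"
  thus ?thesis using orb_sub[OF _ True] finite_subset by metis
next
  case False
  assume "\<sigma> permutes A" "finite A"
  thus ?thesis using orb_out[OF _ False] by simp
qed

lemma nilp:
  assumes "\<sigma> permutes A" "finite A"
  obtains p where "\<sigma>^^p = id" "p > 0"
proof -
  have "permutation \<sigma>" using assms permutation_permutes by blast
  from permutation_is_nilpotent[OF this] show thesis using that by blast
qed

lemma orb_same:
  assumes "\<sigma> permutes A" "finite A" "y \<in> perm_orbit \<sigma> x"
  shows "perm_orbit \<sigma> y = perm_orbit \<sigma> x"
proof -
  obtain p where p: "\<sigma>^^p = id" "p > 0" using nilp[OF assms(1,2)] .
  obtain i where i: "y = (\<sigma>^^i) x" using assms(3) unfolding perm_orbit_def by auto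
  have pk: "\<sigma>^^(p*k) = id" for k by (metis funpow_mult p(1) id_funpow)
  show ?thesis
  proof
    show "perm_orbit \<sigma> y \<subseteq> perm_orbit \<sigma> x"
    proof
      fix z assume "z \<in> perm_orbit \<sigma> y"
      then obtain k where "z = (\<sigma>^^k) y" unfolding perm_orbit_def by auto
      hence "z = (\<sigma>^^(k+i)) x" by (simp add: i funpow_add)
      thus "z \<in> perm_orbit \<sigma> x" by (rule ssubst) (rule orb_funpow)
    qed
  next
    show "perm_orbit \<sigma> x \<subseteq> perm_orbit \<sigma> y"
    proof
      fix z assume "z \<in> perm_orbit \<sigma> x"
      then obtain k where k: "z = (\<sigma>^^k) x" unfolding perm_orbit_def by auto
      have "i \<le> k + p*i" 
      proof -
        have "i \<le> p*i" using p(2) by (cases p) auto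
        thus ?thesis by (simp add: trans_le_add2)
      qed
      have "(\<sigma>^^(k + p*i - i)) y = (\<sigma>^^(k + p*i - i + i)) x"
        by (simp add: i funpow_add)
      also have "\<dots> = (\<sigma>^^(k + p*i)) x" using \<open>i \<le> k + p*i\<close> by simp
      also have "\<dots> = z" by (simp add: funpow_add pk k)
      finally have "z = (\<sigma>^^(k + p*i - i)) y" by simp
      thus "z \<in> perm_orbit \<sigma> y" by (rule ssubst) (rule orb_funpow)
    qed
  qed
qed

lemma orb_image:
  assumes "\<sigma> permutes A" "finite A"
  shows "\<sigma> ` perm_orbit \<sigma> x = perm_orbit \<sigma> x"
proof
  show "\<sigma> ` perm_orbit \<sigma> x \<subseteq> perm_orbit \<sigma> x"
  proof
    fix z assume "z \<in> \<sigma> ` perm_orbit \<sigma> x"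
    then obtain k where "z = \<sigma> ((\<sigma>^^k) x)" unfolding perm_orbit_def by auto
    hence "z = (\<sigma>^^(Suc k)) x" by simp
    thus "z \<in> perm_orbit \<sigma> x" by (rule ssubst) (rule orb_funpow)
  qed
  show "perm_orbit \<sigma> x \<subseteq> \<sigma> ` perm_orbit \<sigma> x"
  proof
    fix z assume "z \<in> perm_orbit \<sigma> x"
    hence zx: "perm_orbit \<sigma> z = perm_orbit \<sigma> x" using orb_same assms by blast
    obtain p where p: "\<sigma>^^p = id" "p > 0" using nilp[OF assms] .
    have "Suc (p - 1) = p" using p by simp
    have "\<sigma> ((\<sigma>^^(p - 1)) z) = (\<sigma>^^(Suc (p - 1))) z" by simp
    also have "\<dots> = z" unfolding \<open>Suc (p - 1) = p\<close> p(1) by simp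
    finally have "z = \<sigma> ((\<sigma>^^(p - 1)) z)" by simp
    moreover have "(\<sigma>^^(p - 1)) z \<in> perm_orbit \<sigma> z" by (rule orb_funpow)
    ultimately show "z \<in> \<sigma> ` perm_orbit \<sigma> x" using zx by auto
  qed
qed


definition rest :: "(nat \<Rightarrow> nat) \<Rightarrow> nat \<Rightarrow> nat \<Rightarrow> nat" where
  "rest \<sigma> a x = (if x \<in> perm_orbit \<sigma> a then x else \<sigma> x)"

lemma orb_disj:
  assumes "\<sigma> permutes A" "finite A" "x \<notin> perm_orbit \<sigma> a"
  shows "(\<sigma>^^k) x \<notin> perm_orbit \<sigma> a"
proof
  assume h: "(\<sigma>^^k) x \<in> perm_orbit \<sigma> a"
  have "perm_orbit \<sigma> ((\<sigma>^^k) x) = perm_orbit \<sigma> a" using orb_same[OF assms(1,2) h] .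
  moreover have "perm_orbit \<sigma> ((\<sigma>^^k) x) = perm_orbit \<sigma> x" using orb_same[OF assms(1,2) orb_funpow] .
  ultimately show False using assms(3) orb_self by metis
qed

lemma rest_permutes:
  assumes "\<sigma> permutes A" "finite A"
  shows "rest \<sigma> a permutes (A - perm_orbit \<sigma> a)"
proof (rule bij_imp_permutes)
  let ?O = "perm_orbit \<sigma> a"
  have "\<sigma> ` (A - ?O) = \<sigma> ` A - \<sigma> ` ?O" by (rule image_set_diff[OF permutes_inj[OF assms(1)]])
  also have "\<dots> = A - ?O" using permutes_image[OF assms(1)] orb_image[OF assms] by simp
  finally have "bij_betw \<sigma> (A - ?O) (A - ?O)"
    using bij_betw_subset[OF permutes_imp_bij[OF assms(1)]] by blast
  thus "bij_betw (rest \<sigma> a) (A - ?O) (A - ?O)"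
    by (rule iffD1[OF bij_betw_cong, rotated]) (simp add: rest_def)
next
  fix x assume "x \<notin> A - perm_orbit \<sigma> a"
  thus "rest \<sigma> a x = x" using permutes_not_in[OF assms(1)] by (auto simp: rest_def)
qed

lemma rest_funpow:
  assumes "\<sigma> permutes A" "finite A" "x \<notin> perm_orbit \<sigma> a"
  shows "(rest \<sigma> a ^^ k) x = (\<sigma>^^k) x"
proof (induct k)
  case (Suc k)
  have "(\<sigma>^^k) x \<notin> perm_orbit \<sigma> a" by (rule orb_disj[OF assms])
  thus ?case using Suc by (simp add: rest_def)
qed simp

lemma rest_orbit:
  assumes "\<sigma> permutes A" "finite A" "x \<notin> perm_orbit \<sigma> a"
  shows "perm_orbit (rest \<sigma> a) x = perm_orbit \<sigma> x"
  unfolding perm_orbit_def using rest_funpow[OF assms] by simp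

lemma ctype_rest:
  assumes "\<sigma> permutes A" "finite A" "a \<in> A"
  shows "ctype A \<sigma> = add_mset (card (perm_orbit \<sigma> a)) (ctype (A - perm_orbit \<sigma> a) (rest \<sigma> a))"
proof -
  let ?O = "perm_orbit \<sigma> a"
  let ?S = "perm_orbit (rest \<sigma> a) ` (A - ?O)"
  have img: "perm_orbit \<sigma> ` A = insert ?O ?S"
  proof (rule Set.set_eqI)
    fix Y show "Y \<in> perm_orbit \<sigma> ` A \<longleftrightarrow> Y \<in> insert ?O ?S"
    proof
      assume "Y \<in> perm_orbit \<sigma> ` A"
      then obtain x where x: "x \<in> A" "Y = perm_orbit \<sigma> x" by auto
      show "Y \<in> insert ?O ?S"
      proof (cases "x \<in> ?O")
        case True thus ?thesis using orb_same[OF assms(1,2) True] x by simp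
      next
        case False thus ?thesis using rest_orbit[OF assms(1,2) False] x by auto
      qed
    next
      assume "Y \<in> insert ?O ?S"
      thus "Y \<in> perm_orbit \<sigma> ` A"
      proof
        assume "Y = ?O" thus ?thesis using assms(3) by simp
      next
        assume "Y \<in> ?S"
        then obtain x where "x \<in> A" "x \<notin> ?O" "Y = perm_orbit (rest \<sigma> a) x" by auto
        thus ?thesis using rest_orbit[OF assms(1,2)] by auto
      qed
    qed
  qed
  have notin: "?O \<notin> ?S"
  proof
    assume "?O \<in> ?S"
    then obtain x where "x \<in> A" "x \<notin> ?O" "?O = perm_orbit (rest \<sigma> a) x" by auto
    thus False using rest_orbit[OF assms(1,2)] orb_self by metis
  qed
  have fin: "finite ?S" using assms(2) by simp
  have "mset_set (perm_orbit \<sigma> ` A) = add_mset ?O (mset_set ?S)"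
    unfolding img by (rule mset_set.insert[OF fin notin])
  thus ?thesis unfolding ctype_def by simp
qed

lemma ctype_empty: "ctype {} \<sigma> = {#}"
  by (simp add: ctype_def)

lemma orb_card_pos:
  assumes "\<sigma> permutes A" "finite A"
  shows "card (perm_orbit \<sigma> a) > 0"
  using orb_finite[OF assms] orb_self by (metis card_gt_0_iff empty_iff)

lemma ctype_part:
  assumes "\<sigma> permutes A" "finite A"
  shows "sum_mset (ctype A \<sigma>) = card A \<and> (\<forall>i\<in>#ctype A \<sigma>. i > 0)"
  using assms
proof (induction "card A" arbitrary: A \<sigma> rule: less_induct)
  case less
  show ?case
  proof (cases "A = {}")
    case True thus ?thesis by (simp add: ctype_empty)
  next
    case False
    then obtain a where a: "a \<in> A" by auto
    let ?O = "perm_orbit \<sigma> a"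
    have sub: "?O \<subseteq> A" by (rule orb_sub[OF less.prems(1) a])
    have pos: "card ?O > 0" by (rule orb_card_pos[OF less.prems])
    have cd: "card (A - ?O) = card A - card ?O" using card_Diff_subset[OF finite_subset[OF sub less.prems(2)] sub] .
    have le: "card ?O \<le> card A" using card_mono[OF less.prems(2) sub] .
    have "card (A - ?O) < card A" using cd pos le by simp
    from less.hyps[OF this rest_permutes[OF less.prems] finite_Diff[OF less.prems(2)]]
    have IH: "sum_mset (ctype (A - ?O) (rest \<sigma> a)) = card (A - ?O) \<and> (\<forall>i\<in>#ctype (A - ?O) (rest \<sigma> a). i > 0)" .
    show ?thesis unfolding ctype_rest[OF less.prems a] using IH pos cd le by auto
  qed
qed


lemma perm_of_permutes: "\<sigma> permutes A \<Longrightarrow> finite A \<Longrightarrow> permutation \<sigma>"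
  using permutation_permutes by blast

lemma orb_range: "perm_orbit \<sigma> a = range (\<lambda>i. (\<sigma>^^i) a)"
  unfolding perm_orbit_def by auto

lemma orb_card_lp:
  assumes "\<sigma> permutes A" "finite A"
  shows "card (perm_orbit \<sigma> a) = least_power \<sigma> a"
proof -
  have p: "permutation \<sigma>" by (rule perm_of_permutes[OF assms])
  have "set (support \<sigma> a) = perm_orbit \<sigma> a" unfolding orb_range by (rule support_set[OF p])
  moreover have "distinct (support \<sigma> a)" by (rule cycle_of_permutation[OF p])
  ultimately show ?thesis using distinct_card by fastforce
qed

lemma fp_mod:
  assumes "\<sigma> permutes A" "finite A"
  shows "(\<sigma>^^i) a = (\<sigma>^^(i mod least_power \<sigma> a)) a"
proof -
  have p: "permutation \<sigma>" by (rule perm_of_permutes[OF assms])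
  let ?L = "least_power \<sigma> a"
  have "(\<sigma>^^(?L * (i div ?L))) a = a" using least_power_dvd[OF p, of a "?L * (i div ?L)"] by simp
  hence "(\<sigma>^^(i mod ?L)) ((\<sigma>^^(?L * (i div ?L))) a) = (\<sigma>^^(i mod ?L)) a" by simp
  moreover have "i = i mod ?L + ?L * (i div ?L)" by simp
  ultimately show ?thesis by (metis funpow_add comp_apply)
qed

lemma fp_eq:
  assumes "\<sigma> permutes A" "finite A"
  shows "(\<sigma>^^i) a = (\<sigma>^^j) a \<longleftrightarrow> i mod least_power \<sigma> a = j mod least_power \<sigma> a"
proof
  let ?L = "least_power \<sigma> a"
  have p: "permutation \<sigma>" by (rule perm_of_permutes[OF assms])
  have L: "?L > 0" using least_power_of_permutation(2)[OF p] .
  have d: "distinct (support \<sigma> a)" by (rule cycle_of_permutation[OF p])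
  assume "(\<sigma>^^i) a = (\<sigma>^^j) a"
  hence "(\<sigma>^^(i mod ?L)) a = (\<sigma>^^(j mod ?L)) a" using fp_mod[OF assms] by metis
  hence "support \<sigma> a ! (i mod ?L) = support \<sigma> a ! (j mod ?L)" using L by simp
  thus "i mod ?L = j mod ?L" using d nth_eq_iff_index_eq L by fastforce
next
  assume "i mod least_power \<sigma> a = j mod least_power \<sigma> a"
  thus "(\<sigma>^^i) a = (\<sigma>^^j) a" using fp_mod[OF assms] by metis
qed

lemma ctype_mem:
  assumes "j \<in># ctype B \<tau>" "finite B"
  obtains b where "b \<in> B" "card (perm_orbit \<tau> b) = j"
  using assms unfolding ctype_def by auto

lemma conj_exists:
  assumes "\<sigma> permutes A" "\<tau> permutes B" "finite A" "finite B" "ctype A \<sigma> = ctype B \<tau>"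
  shows "\<exists>\<pi>. bij_betw \<pi> A B \<and> (\<forall>x\<in>A. \<pi> (\<sigma> x) = \<tau> (\<pi> x))"
  using assms
proof (induction "card A" arbitrary: A B \<sigma> \<tau> rule: less_induct)
  case less
  show ?case
  proof (cases "A = {}")
    case True
    have "ctype B \<tau> = {#}" using less.prems(5) True ctype_empty by metis
    hence "card B = 0" using ctype_part[OF less.prems(2,4)] by simp
    hence "B = {}" using less.prems(4) by simp
    thus ?thesis using True by auto
  next
    case False
    then obtain a where a: "a \<in> A" by auto
    let ?O = "perm_orbit \<sigma> a"
    let ?j = "card ?O"
    have jm: "?j \<in># ctype B \<tau>" using less.prems(5) ctype_rest[OF less.prems(1,3) a] by (metis union_single_eq_member)
    obtain b where b: "b \<in> B" "card (perm_orbit \<tau> b) = ?j" using ctype_mem[OF jm less.prems(4)] .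
    let ?Q = "perm_orbit \<tau> b"
    have subO: "?O \<subseteq> A" by (rule orb_sub[OF less.prems(1) a])
    have subQ: "?Q \<subseteq> B" by (rule orb_sub[OF less.prems(2) b(1)])
    have pos: "?j > 0" by (rule orb_card_pos[OF less.prems(1,3)])
    have "card (A - ?O) < card A"
      using card_Diff_subset[OF finite_subset[OF subO less.prems(3)] subO] card_mono[OF less.prems(3) subO] pos by simp
    moreover have "ctype (A - ?O) (rest \<sigma> a) = ctype (B - ?Q) (rest \<tau> b)"
      using less.prems(5) ctype_rest[OF less.prems(1,3) a] ctype_rest[OF less.prems(2,4) b(1)] b(2) by simp
    ultimately obtain \<pi>' where pi': "bij_betw \<pi>' (A - ?O) (B - ?Q)"
      "\<forall>x\<in>A - ?O. \<pi>' (rest \<sigma> a x) = rest \<tau> b (\<pi>' x)"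
      using less.hyps[OF _ rest_permutes[OF less.prems(1,3)] rest_permutes[OF less.prems(2,4)]] less.prems(3,4) by blast
    define \<pi> where "\<pi> x = (if x \<in> ?O then (\<tau>^^(SOME i. x = (\<sigma>^^i) a)) b else \<pi>' x)" for x
    have Ls: "least_power \<sigma> a = ?j" using orb_card_lp[OF less.prems(1,3)] by simp
    have Lt: "least_power \<tau> b = ?j" using orb_card_lp[OF less.prems(2,4)] b(2) by simp
    have pi_pow: "\<pi> ((\<sigma>^^i) a) = (\<tau>^^i) b" for i
    proof -
      have ex: "\<exists>k. (\<sigma>^^i) a = (\<sigma>^^k) a" by blast
      have "(\<sigma>^^i) a = (\<sigma>^^(SOME k. (\<sigma>^^i) a = (\<sigma>^^k) a)) a" by (rule someI_ex[OF ex])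
      hence "i mod ?j = (SOME k. (\<sigma>^^i) a = (\<sigma>^^k) a) mod ?j" using fp_eq[OF less.prems(1,3)] Ls by metis
      hence "(\<tau>^^(SOME k. (\<sigma>^^i) a = (\<sigma>^^k) a)) b = (\<tau>^^i) b" using fp_eq[OF less.prems(2,4)] Lt by metis
      thus ?thesis unfolding \<pi>_def using orb_funpow by simp
    qed
    have bO: "bij_betw \<pi> ?O ?Q"
      unfolding bij_betw_def
    proof
      show "inj_on \<pi> ?O"
      proof (rule inj_onI)
        fix x y assume "x \<in> ?O" "y \<in> ?O" "\<pi> x = \<pi> y"
        then obtain i k where "x = (\<sigma>^^i) a" "y = (\<sigma>^^k) a" "(\<tau>^^i) b = (\<tau>^^k) b"
          unfolding perm_orbit_def using pi_pow by auto
        thus "x = y" using fp_eq[OF less.prems(1,3)] fp_eq[OF less.prems(2,4)] Ls Lt by metis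
      qed
      show "\<pi> ` ?O = ?Q" unfolding orb_range using pi_pow by (auto simp: image_iff)
    qed
    have bR: "bij_betw \<pi> (A - ?O) (B - ?Q)"
      using pi'(1) by (rule iffD1[OF bij_betw_cong, rotated]) (simp add: \<pi>_def)
    have "bij_betw \<pi> (?O \<union> (A - ?O)) (?Q \<union> (B - ?Q))"
      by (rule bij_betw_combine[OF bO bR]) auto
    moreover have "?O \<union> (A - ?O) = A" "?Q \<union> (B - ?Q) = B" using subO subQ by auto
    ultimately have bij: "bij_betw \<pi> A B" by simp
    have comm: "\<pi> (\<sigma> x) = \<tau> (\<pi> x)" if x: "x \<in> A" for x
    proof (cases "x \<in> ?O")
      case True
      then obtain i where i: "x = (\<sigma>^^i) a" unfolding perm_orbit_def by auto
      have "\<pi> (\<sigma> x) = \<pi> ((\<sigma>^^(Suc i)) a)" using i by simp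
      also have "\<dots> = (\<tau>^^(Suc i)) b" by (rule pi_pow)
      also have "\<dots> = \<tau> (\<pi> x)" using i pi_pow by simp
      finally show ?thesis .
    next
      case False
      have xr: "x \<in> A - ?O" using x False by simp
      have "rest \<sigma> a x \<in> A - ?O"
        using permutes_in_image[OF rest_permutes[OF less.prems(1,3)]] xr by blast
      hence sx: "\<sigma> x \<in> A - ?O" using False by (simp add: rest_def)
      have "\<pi>' x \<in> B - ?Q" using pi'(1) xr bij_betwE by blast
      hence "rest \<tau> b (\<pi>' x) = \<tau> (\<pi>' x)" by (simp add: rest_def)
      moreover have "\<pi>' (rest \<sigma> a x) = rest \<tau> b (\<pi>' x)" using pi'(2) xr by blast
      ultimately show ?thesis using sx False by (simp add: \<pi>_def rest_def)
    qed
    show ?thesis using bij comm by blast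
  qed
qed

lemma conj_perm:
  assumes "\<sigma> permutes A" "\<tau> permutes A" "finite A" "ctype A \<sigma> = ctype A \<tau>"
  shows "\<exists>\<pi>. \<pi> permutes A \<and> \<tau> \<circ> \<pi> = \<pi> \<circ> \<sigma>"
proof -
  obtain \<pi> where pi: "bij_betw \<pi> A A" "\<forall>x\<in>A. \<pi> (\<sigma> x) = \<tau> (\<pi> x)"
    using conj_exists[OF assms(1,2,3,3,4)] by blast
  define \<pi>' where "\<pi>' x = (if x \<in> A then \<pi> x else x)" for x
  have "\<pi>' permutes A"
  proof (rule bij_imp_permutes)
    show "bij_betw \<pi>' A A" using pi(1) by (rule iffD1[OF bij_betw_cong, rotated]) (simp add: \<pi>'_def)
  qed (simp add: \<pi>'_def)
  moreover have "\<tau> \<circ> \<pi>' = \<pi>' \<circ> \<sigma>"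
  proof
    fix x show "(\<tau> \<circ> \<pi>') x = (\<pi>' \<circ> \<sigma>) x"
    proof (cases "x \<in> A")
      case True
      have "\<sigma> x \<in> A" using permutes_in_image[OF assms(1)] True by simp
      thus ?thesis using True pi(2) by (simp add: \<pi>'_def)
    next
      case False
      thus ?thesis using permutes_not_in[OF assms(1) False] permutes_not_in[OF assms(2) False]
        by (simp add: \<pi>'_def)
    qed
  qed
  ultimately show ?thesis by blast
qed




definition glue :: "nat list \<Rightarrow> (nat \<Rightarrow> nat) \<Rightarrow> nat \<Rightarrow> nat" where
  "glue cs \<tau> x = (if x \<in> set cs then cycle_of_list cs x else \<tau> x)"

lemma cyc_pow:
  assumes "distinct cs" "cs \<noteq> []"
  shows "(cycle_of_list cs ^^ i) (cs ! 0) = cs ! (i mod length cs)"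
proof -
  have "map (cycle_of_list cs ^^ i) cs = rotate i cs" by (rule cyclic_rotation[OF assms(1)])
  hence "map (cycle_of_list cs ^^ i) cs ! 0 = rotate i cs ! 0" by simp
  moreover have "map (cycle_of_list cs ^^ i) cs ! 0 = (cycle_of_list cs ^^ i) (cs ! 0)"
    using assms(2) by (simp add: nth_map)
  ultimately have "(cycle_of_list cs ^^ i) (cs ! 0) = rotate i cs ! 0" by simp
  also have "\<dots> = cs ! (i mod length cs)" using assms(2) nth_rotate[of 0 cs i] by simp
  finally show ?thesis .
qed

context
  fixes cs :: "nat list" and A :: "nat set" and \<tau> :: "nat \<Rightarrow> nat"
  assumes d: "distinct cs" and ne: "cs \<noteq> []" and sub: "set cs \<subseteq> A" and fin: "finite A"
    and tp: "\<tau> permutes (A - set cs)"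
begin

lemma glue_permutes: "glue cs \<tau> permutes A"
proof (rule bij_imp_permutes)
  have b1: "bij_betw (glue cs \<tau>) (set cs) (set cs)"
    using permutes_imp_bij[OF cycle_permutes[of cs]]
    by (rule iffD1[OF bij_betw_cong, rotated]) (simp add: glue_def)
  have b2: "bij_betw (glue cs \<tau>) (A - set cs) (A - set cs)"
    using permutes_imp_bij[OF tp]
    by (rule iffD1[OF bij_betw_cong, rotated]) (simp add: glue_def)
  have "bij_betw (glue cs \<tau>) (set cs \<union> (A - set cs)) (set cs \<union> (A - set cs))"
    by (rule bij_betw_combine[OF b1 b2]) auto
  moreover have "set cs \<union> (A - set cs) = A" using sub by auto
  ultimately show "bij_betw (glue cs \<tau>) A A" by simp
next
  fix x assume "x \<notin> A"
  thus "glue cs \<tau> x = x" using sub permutes_not_in[OF tp] by (auto simp: glue_def)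
qed

lemma glue_pow: "(glue cs \<tau> ^^ i) (cs ! 0) = cs ! (i mod length cs)"
proof -
  have inS: "(cycle_of_list cs ^^ i) (cs ! 0) \<in> set cs" for i
    using cyc_pow[OF d ne] ne by simp
  have "(glue cs \<tau> ^^ i) (cs ! 0) = (cycle_of_list cs ^^ i) (cs ! 0)"
  proof (induct i)
    case (Suc i)
    thus ?case using inS[of i] by (simp add: glue_def)
  qed simp
  thus ?thesis using cyc_pow[OF d ne] by simp
qed

lemma glue_lp: "least_power (glue cs \<tau>) (cs ! 0) = length cs"
  unfolding least_power_def
proof (rule Least_equality)
  show "(glue cs \<tau> ^^ length cs) (cs ! 0) = cs ! 0 \<and> length cs > 0"
    using glue_pow ne by simp
next
  fix m assume m: "(glue cs \<tau> ^^ m) (cs ! 0) = cs ! 0 \<and> m > 0"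
  hence "cs ! (m mod length cs) = cs ! 0" using glue_pow by simp
  moreover have "m mod length cs < length cs" "0 < length cs" using ne by auto
  ultimately have "m mod length cs = 0" using nth_eq_iff_index_eq[OF d] by simp
  thus "length cs \<le> m" using m by (metis dvd_imp_le mod_0_imp_dvd)
qed

lemma glue_support: "support (glue cs \<tau>) (cs ! 0) = cs"
proof -
  have "map (\<lambda>i. cs ! (i mod length cs)) [0..<length cs] = map (\<lambda>i. cs ! i) [0..<length cs]"
    by (rule map_cong) auto
  thus ?thesis unfolding glue_lp glue_pow by (simp add: map_nth)
qed

lemma glue_orbit: "perm_orbit (glue cs \<tau>) (cs ! 0) = set cs"
proof -
  have "perm_orbit (glue cs \<tau>) (cs ! 0) = set (support (glue cs \<tau>) (cs ! 0))"
    unfolding orb_range using support_set[OF perm_of_permutes[OF glue_permutes fin]] by simp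
  thus ?thesis unfolding glue_support .
qed

lemma glue_rest: "rest (glue cs \<tau>) (cs ! 0) = \<tau>"
proof
  fix x show "rest (glue cs \<tau>) (cs ! 0) x = \<tau> x"
  proof (cases "x \<in> set cs")
    case True
    have "x \<notin> A - set cs" using True by simp
    thus ?thesis using True permutes_not_in[OF tp] unfolding rest_def glue_orbit by simp
  next
    case False thus ?thesis unfolding rest_def glue_orbit by (simp add: glue_def)
  qed
qed

lemma glue_ctype: "ctype A (glue cs \<tau>) = add_mset (length cs) (ctype (A - set cs) \<tau>)"
proof -
  have a: "cs ! 0 \<in> A" using sub ne by auto
  show ?thesis using ctype_rest[OF glue_permutes fin a] unfolding glue_orbit glue_rest
    using distinct_card[OF d] by simp
qed

end

lemma support_hd:
  assumes "\<sigma> permutes A" "finite A"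
  shows "support \<sigma> a = a # tl (support \<sigma> a)"
proof -
  have "least_power \<sigma> a > 0" using least_power_of_permutation(2)[OF perm_of_permutes[OF assms]] .
  hence "support \<sigma> a \<noteq> []" "hd (support \<sigma> a) = a" by (simp_all add: hd_map upt_conv_Cons)
  thus ?thesis by (metis list.collapse)
qed

lemma decomp:
  assumes "\<sigma> permutes A" "finite A"
  shows "glue (support \<sigma> a) (rest \<sigma> a) = \<sigma>"
proof
  fix x
  let ?cs = "support \<sigma> a"
  let ?L = "least_power \<sigma> a"
  have p: "permutation \<sigma>" by (rule perm_of_permutes[OF assms])
  have d: "distinct ?cs" by (rule cycle_of_permutation[OF p])
  have so: "set ?cs = perm_orbit \<sigma> a" unfolding orb_range by (rule support_set[OF p])
  have L: "?L > 0" using least_power_of_permutation(2)[OF p] .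
  show "glue ?cs (rest \<sigma> a) x = \<sigma> x"
  proof (cases "x \<in> set ?cs")
    case True
    then obtain i where i: "i < ?L" "x = (\<sigma>^^i) a" by auto
    have "map (cycle_of_list ?cs) ?cs = rotate 1 ?cs" using cyclic_rotation[OF d, of 1] by simp
    hence "map (cycle_of_list ?cs) ?cs ! i = rotate 1 ?cs ! i" by simp
    moreover have "length ?cs = ?L" by simp
    ultimately have "cycle_of_list ?cs (?cs ! i) = rotate 1 ?cs ! i" using i(1) by (simp only: nth_map)
    also have "\<dots> = ?cs ! ((1 + i) mod ?L)" using i(1) nth_rotate[of i ?cs 1] by simp
    also have "\<dots> = (\<sigma>^^((1 + i) mod ?L)) a" using L by simp
    also have "\<dots> = (\<sigma>^^(1 + i)) a" using fp_mod[OF assms, of "1+i" a] by simp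
    also have "\<dots> = \<sigma> x" using i(2) by simp
    finally have "cycle_of_list ?cs x = \<sigma> x" using i by simp
    thus ?thesis using True by (simp add: glue_def)
  next
    case False
    thus ?thesis using so by (simp add: glue_def rest_def)
  qed
qed




definition cS :: "nat set \<Rightarrow> nat multiset \<Rightarrow> (nat \<Rightarrow> nat) set" where
  "cS A lam = {\<sigma>. \<sigma> permutes A \<and> ctype A \<sigma> = lam}"

lemma z_ext:
  assumes "finite F" "set_mset M \<subseteq> F"
  shows "z_num M = (\<Prod>i\<in>F. i ^ count M i * fact (count M i))"
  unfolding z_num_def
  by (rule prod.mono_neutral_left[OF assms(1,2)]) (auto simp: not_in_iff)

lemma z_remove:
  assumes "j \<in># lam"
  shows "z_num lam = j * count lam j * z_num (lam - {#j#})"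
proof -
  let ?mu = "lam - {#j#}"
  let ?F = "set_mset lam"
  have fF: "finite ?F" by simp
  have subm: "set_mset ?mu \<subseteq> ?F" by (meson in_diffD subsetI)
  obtain c where c: "count lam j = Suc c" using assms by (metis count_greater_zero_iff gr0_implies_Suc)
  have cm: "count ?mu j = c" using c by simp
  have eq: "i ^ count lam i * fact (count lam i) = i ^ count ?mu i * fact (count ?mu i)" if "i \<in> ?F - {j}" for i
    using that by simp
  have "z_num lam = j ^ count lam j * fact (count lam j) * (\<Prod>i\<in>?F - {j}. i ^ count lam i * fact (count lam i))"
    unfolding z_num_def using prod.remove[OF fF assms] by simp
  also have "\<dots> = j ^ Suc c * fact (Suc c) * (\<Prod>i\<in>?F - {j}. i ^ count ?mu i * fact (count ?mu i))"
    using prod.cong[OF refl eq] c by simp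
  also have "\<dots> = j * count lam j * (j ^ count ?mu j * fact (count ?mu j) * (\<Prod>i\<in>?F - {j}. i ^ count ?mu i * fact (count ?mu i)))"
    using c cm by (simp add: algebra_simps)
  also have "j ^ count ?mu j * fact (count ?mu j) * (\<Prod>i\<in>?F - {j}. i ^ count ?mu i * fact (count ?mu i)) = z_num ?mu"
    using z_ext[OF fF subm] prod.remove[OF fF assms, of "\<lambda>i. i ^ count ?mu i * fact (count ?mu i)"] by simp
  finally show ?thesis .
qed

lemma sum_count_gen:
  assumes "finite F" "set_mset M \<subseteq> F"
  shows "(\<Sum>j\<in>F. j * count M j) = sum_mset M"
  using assms(2)
proof (induction M)
  case empty thus ?case by simp
next
  case (add x M)
  have xF: "x \<in> F" using add.prems by simp
  have "(\<Sum>j\<in>F. j * count (add_mset x M) j) = (\<Sum>j\<in>F. j * count M j + (if j = x then x else 0))"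
    by (rule sum.cong) auto
  also have "\<dots> = (\<Sum>j\<in>F. j * count M j) + x" using xF assms(1) by (simp add: sum.distrib)
  also have "\<dots> = sum_mset M + x" using add by simp
  finally show ?case by simp
qed

lemma sum_count: "(\<Sum>j\<in>set_mset M. j * count M j) = sum_mset M"
  by (rule sum_count_gen) auto

lemma fact_split_prod:
  assumes "k \<le> m"
  shows "\<Prod>{m - k + 1..m} * fact (m - k) = (fact m :: nat)"
  using fact_eq_fact_times[of "m - k" m] assms by simp

lemma finite_cS: "finite A \<Longrightarrow> finite (cS A lam)"
  unfolding cS_def by (rule finite_subset[OF _ finite_permutations]) auto

lemma mem_le_sum:
  assumes "i \<in># (M :: nat multiset)"
  shows "i \<le> sum_mset M"
proof -
  obtain N where "M = add_mset i N" using multi_member_split[OF assms] by blast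
  thus ?thesis by simp
qed

lemma count_ctype:
  assumes "finite A" "\<forall>i\<in>#lam. i > 0" "sum_mset lam = card A"
  shows "card (cS A lam) * z_num lam = fact (card A)"
  using assms
proof (induction "card A" arbitrary: A lam rule: less_induct)
  case less
  show ?case
  proof (cases "A = {}")
    case True
    have "lam = {#}"
    proof (rule ccontr)
      assume "lam \<noteq> {#}"
      then obtain i where i: "i \<in># lam" by (meson multiset_nonemptyE)
      hence "i \<le> sum_mset lam" by (rule mem_le_sum)
      thus False using i less.prems(2,3) True by auto
    qed
    moreover have "cS {} {#} = {id}" unfolding cS_def by (auto simp: ctype_empty)
    ultimately show ?thesis using True by (simp add: z_num_def)
  next
    case False
    then obtain a where a: "a \<in> A" by auto
    let ?N = "card A"
    define f where "f \<sigma> = (tl (support \<sigma> a), rest \<sigma> a)" for \<sigma>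
    define T where "T = {(xs, \<tau>). distinct (a # xs) \<and> set xs \<subseteq> A \<and> \<tau> permutes (A - set (a # xs)) \<and>
        add_mset (length (a # xs)) (ctype (A - set (a # xs)) \<tau>) = lam}"
    have bij: "bij_betw f (cS A lam) T"
      unfolding bij_betw_def
    proof (intro conjI)
      show "inj_on f (cS A lam)"
      proof (rule inj_onI)
        fix s1 s2 assume s: "s1 \<in> cS A lam" "s2 \<in> cS A lam" "f s1 = f s2"
        have p: "s1 permutes A" "s2 permutes A" using s unfolding cS_def by auto
        have "support s1 a = support s2 a" using support_hd[OF p(1) less.prems(1)] support_hd[OF p(2) less.prems(1)] s(3)
          unfolding f_def by (metis prod.inject)
        moreover have "rest s1 a = rest s2 a" using s(3) unfolding f_def by simp
        ultimately show "s1 = s2" using decomp[OF p(1) less.prems(1)] decomp[OF p(2) less.prems(1)] by metis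
      qed
      show "f ` cS A lam = T"
      proof
        show "f ` cS A lam \<subseteq> T"
        proof
          fix y assume "y \<in> f ` cS A lam"
          then obtain \<sigma> where s: "\<sigma> permutes A" "ctype A \<sigma> = lam" "y = f \<sigma>" unfolding cS_def by auto
          let ?cs = "support \<sigma> a"
          have pm: "permutation \<sigma>" by (rule perm_of_permutes[OF s(1) less.prems(1)])
          have cs: "?cs = a # tl ?cs" by (rule support_hd[OF s(1) less.prems(1)])
          have d: "distinct ?cs" by (rule cycle_of_permutation[OF pm])
          have so: "set ?cs = perm_orbit \<sigma> a" unfolding orb_range by (rule support_set[OF pm])
          have subA: "perm_orbit \<sigma> a \<subseteq> A" by (rule orb_sub[OF s(1) a])
          have len: "length ?cs = card (perm_orbit \<sigma> a)" using orb_card_lp[OF s(1) less.prems(1)] by simp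
          have "distinct (a # tl ?cs)" using d cs by metis
          moreover have "set (tl ?cs) \<subseteq> A" using so subA cs by (metis list.set_sel(2) subset_iff list.discI)
          moreover have "rest \<sigma> a permutes (A - set (a # tl ?cs))" using rest_permutes[OF s(1) less.prems(1)] so cs by metis
          moreover have "add_mset (length (a # tl ?cs)) (ctype (A - set (a # tl ?cs)) (rest \<sigma> a)) = lam"
            using ctype_rest[OF s(1) less.prems(1) a] s(2) so cs len by metis
          ultimately show "y \<in> T" unfolding T_def s(3) f_def by simp
        qed
        show "T \<subseteq> f ` cS A lam"
        proof
          fix y assume "y \<in> T"
          then obtain xs \<tau> where y: "y = (xs, \<tau>)" "distinct (a # xs)" "set xs \<subseteq> A"
              "\<tau> permutes (A - set (a # xs))" "add_mset (length (a # xs)) (ctype (A - set (a # xs)) \<tau>) = lam"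
            unfolding T_def by auto
          have sub: "set (a # xs) \<subseteq> A" using y(3) a by simp
          note G = glue_permutes[OF y(2) _ sub less.prems(1) y(4)] glue_ctype[OF y(2) _ sub less.prems(1) y(4)]
             glue_support[OF y(2) _ sub less.prems(1) y(4)] glue_rest[OF y(2) _ sub less.prems(1) y(4)]
          have "glue (a # xs) \<tau> \<in> cS A lam" unfolding cS_def using G(1,2) y(5) by simp
          moreover have "f (glue (a # xs) \<tau>) = y" unfolding f_def y(1) using G(3,4) by simp
          ultimately show "y \<in> f ` cS A lam" by (metis image_eqI)
        qed
      qed
    qed
    define Lx where "Lx = {xs. distinct (a # xs) \<and> set xs \<subseteq> A \<and> Suc (length xs) \<in># lam}"
    define B where "B xs = cS (A - set (a # xs)) (lam - {#Suc (length xs)#})" for xs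
    have T_eq: "T = Sigma Lx B"
    proof (rule Set.set_eqI)
      fix y show "y \<in> T \<longleftrightarrow> y \<in> Sigma Lx B"
      proof (cases y)
        case (Pair xs \<tau>)
        have "(add_mset (Suc (length xs)) M = lam) \<longleftrightarrow> (Suc (length xs) \<in># lam \<and> M = lam - {#Suc (length xs)#})" for M
          by (metis add_mset_remove_trivial insert_DiffM union_single_eq_member)
        thus ?thesis unfolding Pair T_def Lx_def B_def cS_def by auto
      qed
    qed
    have finLx: "finite Lx"
    proof (rule finite_subset[OF _ finite_lists_length_le[OF less.prems(1), of "card A"]])
      show "Lx \<subseteq> {xs. set xs \<subseteq> A \<and> length xs \<le> card A}"
      proof
        fix xs assume "xs \<in> Lx"
        hence "distinct xs" "set xs \<subseteq> A" unfolding Lx_def by auto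
        thus "xs \<in> {xs. set xs \<subseteq> A \<and> length xs \<le> card A}"
        proof -
          have "length xs = card (set xs)" using distinct_card[OF \<open>distinct xs\<close>] by simp
          also have "\<dots> \<le> card A" by (rule card_mono[OF less.prems(1) \<open>set xs \<subseteq> A\<close>])
          finally show ?thesis using \<open>set xs \<subseteq> A\<close> by simp
        qed
      qed
    qed
    have cardT: "card T = (\<Sum>xs\<in>Lx. card (B xs))"
      unfolding T_eq using finLx by (simp add: B_def finite_cS less.prems(1))
    define g where "g j = j * count lam j * fact (?N - j)" for j
    have jle: "j \<le> ?N" if "j \<in># lam" for j
      using mem_le_sum[OF that] less.prems(3) by simp
    have trm: "card (B xs) * z_num lam = g (Suc (length xs))" if xs: "xs \<in> Lx" for xs
    proof -
      let ?j = "Suc (length xs)"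
      let ?mu = "lam - {#?j#}"
      let ?A' = "A - set (a # xs)"
      have xs': "distinct (a # xs)" "set xs \<subseteq> A" "?j \<in># lam" using xs unfolding Lx_def by auto
      have sub: "set (a # xs) \<subseteq> A" using xs'(2) a by simp
      have cA': "card ?A' = ?N - ?j"
        using card_Diff_subset[OF _ sub] distinct_card[OF xs'(1)] by simp
      have jN: "?j \<le> ?N" by (rule jle[OF xs'(3)])
      have lam_eq: "lam = add_mset ?j ?mu" using xs'(3) by simp
      have smu: "sum_mset ?mu = card ?A'"
      proof -
        have "sum_mset lam = ?j + sum_mset ?mu" by (subst lam_eq) simp
        thus ?thesis using less.prems(3) cA' by simp
      qed
      have pmu: "\<forall>i\<in>#?mu. i > 0" using less.prems(2) by (meson in_diffD)
      have "?N > 0" using a less.prems(1) card_gt_0_iff by blast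
      hence "card ?A' < ?N" using cA' by simp
      from less.hyps[OF this _ pmu smu] have IH: "card (cS ?A' ?mu) * z_num ?mu = fact (card ?A')"
        using less.prems(1) by simp
      have "card (B xs) * z_num lam = ?j * count lam ?j * (card (cS ?A' ?mu) * z_num ?mu)"
        unfolding B_def z_remove[OF xs'(3)] by (simp add: algebra_simps)
      also have "\<dots> = g ?j" unfolding IH cA' g_def by simp
      finally show ?thesis .
    qed
    have fib: "card {xs \<in> Lx. Suc (length xs) = j} = \<Prod>{(?N - 1) - (j - 1) + 1..?N - 1}" if j: "j \<in># lam" for j
    proof -
      have j0: "j > 0" using less.prems(2) j by blast
      have "{xs \<in> Lx. Suc (length xs) = j} = {xs. length xs = j - 1 \<and> distinct xs \<and> set xs \<subseteq> A - {a}}"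
        unfolding Lx_def using j j0 by auto
      moreover have "card (A - {a}) = ?N - 1" using a less.prems(1) by simp
      moreover have "j - 1 \<le> card (A - {a})" using jle[OF j] a less.prems(1) by simp
      ultimately show ?thesis using card_lists_distinct_length_eq[of "A - {a}" "j - 1"] less.prems(1) by simp
    qed
    have "card (cS A lam) * z_num lam = card T * z_num lam" using bij_betw_same_card[OF bij] by simp
    also have "\<dots> = (\<Sum>xs\<in>Lx. card (B xs) * z_num lam)" unfolding cardT by (simp add: sum_distrib_right)
    also have "\<dots> = (\<Sum>xs\<in>Lx. g (Suc (length xs)))" using trm by simp
    also have "\<dots> = (\<Sum>j\<in>set_mset lam. \<Sum>xs\<in>{xs \<in> Lx. Suc (length xs) = j}. g (Suc (length xs)))"
      by (rule sum.group[symmetric, OF finLx]) (auto simp: Lx_def)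
    also have "\<dots> = (\<Sum>j\<in>set_mset lam. card {xs \<in> Lx. Suc (length xs) = j} * g j)"
      by (rule sum.cong) auto
    also have "\<dots> = (\<Sum>j\<in>set_mset lam. j * count lam j * fact (?N - 1))"
    proof (rule sum.cong[OF refl])
      fix j assume j: "j \<in> set_mset lam"
      have j0: "j > 0" using less.prems(2) j by blast
      have "\<Prod>{(?N - 1) - (j - 1) + 1..?N - 1} * fact ((?N - 1) - (j - 1)) = fact (?N - 1)"
        by (rule fact_split_prod) (use jle[OF j] in simp)
      moreover have "(?N - 1) - (j - 1) = ?N - j" using j0 jle[OF j] by simp
      ultimately show "card {xs \<in> Lx. Suc (length xs) = j} * g j = j * count lam j * fact (?N - 1)"
        unfolding fib[OF j] g_def by (simp add: algebra_simps)
    qed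
    also have "\<dots> = (\<Sum>j\<in>set_mset lam. j * count lam j) * fact (?N - 1)" by (simp add: sum_distrib_right)
    also have "\<dots> = ?N * fact (?N - 1)" unfolding sum_count less.prems(3) ..
    also have "\<dots> = fact ?N" using False less.prems(1) by (metis card_0_eq fact_num_eq_if of_nat_id)
    finally show ?thesis .
  qed
qed




definition mapG :: "(nat \<Rightarrow> nat) \<Rightarrow> graph \<Rightarrow> graph" where
  "mapG h G = (h ` fst G, (\<lambda>e. h ` e) ` snd G)"

lemma relabel_mapG: "relabel \<sigma> G = mapG \<sigma> G"
  by (simp add: relabel_def mapG_def)

lemma edge_sub:
  assumes "is_ubtree n G" "e \<in> snd G"
  shows "e \<subseteq> fst G"
  using assms unfolding is_ubtree_def by blast

lemma ub_map:
  assumes G: "is_ubtree n G" and inj: "inj_on h (fst G)"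
    and lv: "\<forall>v\<in>fst G. (h v \<in> {1..n} \<longleftrightarrow> v \<in> {1..n})"
    and cov: "{1..n} \<subseteq> h ` fst G"
  shows "is_ubtree n (mapG h G)"
proof -
  let ?V = "fst G" and ?E = "snd G"
  have fV: "finite ?V" and c2: "card ?V \<ge> 2"
    and Ep: "?E \<subseteq> {e. \<exists>u v. e = {u, v} \<and> u \<noteq> v \<and> u \<in> ?V \<and> v \<in> ?V}"
    and con: "connected_graph G" and cE: "card ?E + 1 = card ?V"
    and dg: "\<forall>v\<in>?V. (v \<in> {1..n} \<longrightarrow> deg G v = 1) \<and> (v \<notin> {1..n} \<longrightarrow> deg G v = 3)"
    using G unfolding is_ubtree_def by auto
  have esub: "e \<subseteq> ?V" if "e \<in> ?E" for e using that Ep by blast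
  have injE: "inj_on (\<lambda>e. h ` e) ?E"
    by (rule inj_onI) (use inj_on_image_eq_iff[OF inj] esub in blast)
  have cV: "card (h ` ?V) = card ?V" by (rule card_image[OF inj])
  have cE': "card ((\<lambda>e. h ` e) ` ?E) = card ?E" by (rule card_image[OF injE])
  have Ep': "(\<lambda>e. h ` e) ` ?E \<subseteq> {e. \<exists>u v. e = {u, v} \<and> u \<noteq> v \<and> u \<in> h ` ?V \<and> v \<in> h ` ?V}"
  proof
    fix e' assume "e' \<in> (\<lambda>e. h ` e) ` ?E"
    then obtain e where e: "e \<in> ?E" "e' = h ` e" by auto
    then obtain u v where uv: "e = {u, v}" "u \<noteq> v" "u \<in> ?V" "v \<in> ?V" using Ep by blast
    have "h u \<noteq> h v" using inj uv by (meson inj_onD)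
    thus "e' \<in> {e. \<exists>u v. e = {u, v} \<and> u \<noteq> v \<and> u \<in> h ` ?V \<and> v \<in> h ` ?V}" using e uv by auto
  qed
  have degeq: "deg (mapG h G) (h v) = deg G v" if v: "v \<in> ?V" for v
  proof -
    have "{e' \<in> (\<lambda>e. h ` e) ` ?E. h v \<in> e'} = (\<lambda>e. h ` e) ` {e \<in> ?E. v \<in> e}"
    proof (rule Set.set_eqI, rule iffI)
      fix e' assume "e' \<in> {e' \<in> (\<lambda>e. h ` e) ` ?E. h v \<in> e'}"
      then obtain e where e: "e \<in> ?E" "e' = h ` e" "h v \<in> h ` e" by auto
      have "v \<in> e" using e(3) inj esub[OF e(1)] v by (meson inj_on_image_mem_iff)
      thus "e' \<in> (\<lambda>e. h ` e) ` {e \<in> ?E. v \<in> e}" using e by auto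
    qed auto
    moreover have "inj_on (\<lambda>e. h ` e) {e \<in> ?E. v \<in> e}" using injE by (rule inj_on_subset) auto
    ultimately show ?thesis unfolding deg_def mapG_def by (simp add: card_image)
  qed
  have conn': "connected_graph (mapG h G)"
    unfolding connected_graph_def
  proof (intro ballI)
    fix u' v' assume "u' \<in> fst (mapG h G)" "v' \<in> fst (mapG h G)"
    then obtain u v where uv: "u \<in> ?V" "v \<in> ?V" "u' = h u" "v' = h v" by (auto simp: mapG_def)
    have "(u, v) \<in> {(x, y). {x, y} \<in> ?E}\<^sup>*" using con uv unfolding connected_graph_def by blast
    hence "(h u, h v) \<in> {(x, y). {x, y} \<in> snd (mapG h G)}\<^sup>*"
    proof (induction rule: rtrancl_induct)
      case base thus ?case by simp
    next
      case (step y z)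
      have "{y, z} \<in> snd G" using step(2) by simp
      hence "(\<lambda>e. h ` e) {y, z} \<in> (\<lambda>e. h ` e) ` snd G" by (rule imageI)
      hence "{h y, h z} \<in> snd (mapG h G)" unfolding mapG_def by simp
      thus ?case using step(3) by (simp add: rtrancl_into_rtrancl)
    qed
    thus "(u', v') \<in> {(x, y). {x, y} \<in> snd (mapG h G)}\<^sup>*" using uv by simp
  qed
  show ?thesis unfolding is_ubtree_def
  proof (intro conjI)
    show "finite (fst (mapG h G))" using fV by (simp add: mapG_def)
    show "card (fst (mapG h G)) \<ge> 2" using c2 cV by (simp add: mapG_def)
    show "snd (mapG h G) \<subseteq> {e. \<exists>u v. e = {u, v} \<and> u \<noteq> v \<and> u \<in> fst (mapG h G) \<and> v \<in> fst (mapG h G)}"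
      using Ep' by (simp add: mapG_def)
    show "connected_graph (mapG h G)" by (rule conn')
    show "card (snd (mapG h G)) + 1 = card (fst (mapG h G))" using cE cE' cV by (simp add: mapG_def)
    show "{1..n} \<subseteq> fst (mapG h G)" using cov by (simp add: mapG_def)
    show "\<forall>v\<in>fst (mapG h G). (v \<in> {1..n} \<longrightarrow> deg (mapG h G) v = 1) \<and> (v \<notin> {1..n} \<longrightarrow> deg (mapG h G) v = 3)"
    proof
      fix w assume "w \<in> fst (mapG h G)"
      then obtain v where v: "v \<in> ?V" "w = h v" by (auto simp: mapG_def)
      show "(w \<in> {1..n} \<longrightarrow> deg (mapG h G) w = 1) \<and> (w \<notin> {1..n} \<longrightarrow> deg (mapG h G) w = 3)"
        using dg v degeq[OF v(1)] lv by auto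
    qed
  qed
qed

lemma relabel_ub:
  assumes "\<sigma> permutes {1..n}" "G \<in> ubtrees n"
  shows "relabel \<sigma> G \<in> ubtrees n"
proof -
  have G: "is_ubtree n G" using assms(2) by (simp add: ubtrees_def)
  have sub: "{1..n} \<subseteq> fst G" using G unfolding is_ubtree_def by blast
  have "{1..n} = \<sigma> ` {1..n}" using permutes_image[OF assms(1)] by simp
  also have "\<dots> \<subseteq> \<sigma> ` fst G" using sub by blast
  finally have cov: "{1..n} \<subseteq> \<sigma> ` fst G" .
  have "is_ubtree n (mapG \<sigma> G)"
  proof (rule ub_map[OF G])
    show "inj_on \<sigma> (fst G)" using permutes_inj[OF assms(1)] by (simp add: inj_on_def inj_def)
    show "\<forall>v\<in>fst G. (\<sigma> v \<in> {1..n} \<longleftrightarrow> v \<in> {1..n})" using permutes_in_image[OF assms(1)] by blast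
  qed (rule cov)
  thus ?thesis by (simp add: ubtrees_def relabel_mapG)
qed

lemma relabel_comp: "relabel \<sigma> (relabel \<tau> G) = relabel (\<sigma> \<circ> \<tau>) G"
  by (simp add: relabel_def image_comp)

lemma relabel_id: "relabel id G = G"
  by (simp add: relabel_def)

lemma leaf_iso_mapG:
  assumes "leaf_iso n G H"
  obtains f where "bij_betw f (fst G) (fst H)" "\<forall>i\<in>{1..n}. f i = i" "H = mapG f G"
proof -
  obtain f where f: "bij_betw f (fst G) (fst H)" "\<forall>i\<in>{1..n}. f i = i" "snd H = (\<lambda>e. f ` e) ` snd G"
    using assms unfolding leaf_iso_def by blast
  have "H = mapG f G" unfolding mapG_def using f(1,3) bij_betw_imp_surj_on by (metis prod.collapse)
  thus thesis using that f by blast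
qed

lemma leaf_iso_refl: "leaf_iso n G G"
  unfolding leaf_iso_def by (rule exI[of _ id]) simp

lemma leaf_iso_sym:
  assumes "is_ubtree n G" "leaf_iso n G H"
  shows "leaf_iso n H G"
proof -
  obtain f where f: "bij_betw f (fst G) (fst H)" "\<forall>i\<in>{1..n}. f i = i" "snd H = (\<lambda>e. f ` e) ` snd G"
    using assms(2) unfolding leaf_iso_def by blast
  let ?g = "inv_into (fst G) f"
  have inj: "inj_on f (fst G)" using f(1) bij_betw_def by blast
  have sub: "{1..n} \<subseteq> fst G" using assms(1) unfolding is_ubtree_def by blast
  have "bij_betw ?g (fst H) (fst G)" by (rule bij_betw_inv_into[OF f(1)])
  moreover have "\<forall>i\<in>{1..n}. ?g i = i"
  proof
    fix i assume i: "i \<in> {1..n}"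
    have "?g (f i) = i" using inv_into_f_f[OF inj] sub i by blast
    thus "?g i = i" using f(2) i by simp
  qed
  moreover have "snd G = (\<lambda>e. ?g ` e) ` snd H"
  proof -
    have "(\<lambda>e. ?g ` e) ` snd H = (\<lambda>e. ?g ` f ` e) ` snd G" unfolding f(3) by (simp add: image_comp)
    also have "\<dots> = (\<lambda>e. e) ` snd G"
      by (rule image_cong[OF refl]) (rule inv_into_image_cancel[OF inj edge_sub[OF assms(1)]])
    finally show ?thesis by simp
  qed
  ultimately show ?thesis unfolding leaf_iso_def by blast
qed

lemma leaf_iso_trans:
  assumes "leaf_iso n G H" "leaf_iso n H K"
  shows "leaf_iso n G K"
proof -
  obtain f where f: "bij_betw f (fst G) (fst H)" "\<forall>i\<in>{1..n}. f i = i" "snd H = (\<lambda>e. f ` e) ` snd G"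
    using assms(1) unfolding leaf_iso_def by blast
  obtain g where g: "bij_betw g (fst H) (fst K)" "\<forall>i\<in>{1..n}. g i = i" "snd K = (\<lambda>e. g ` e) ` snd H"
    using assms(2) unfolding leaf_iso_def by blast
  have "bij_betw (g \<circ> f) (fst G) (fst K)" by (rule bij_betw_trans[OF f(1) g(1)])
  moreover have "\<forall>i\<in>{1..n}. (g \<circ> f) i = i" using f(2) g(2) by simp
  moreover have "snd K = (\<lambda>e. (g \<circ> f) ` e) ` snd G" unfolding g(3) f(3) by (simp add: image_comp)
  ultimately show ?thesis unfolding leaf_iso_def by blast
qed

lemma equiv_iso: "equiv (ubtrees n) (iso_rel n)"
proof (rule equivI)
  show "refl_on (ubtrees n) (iso_rel n)"
    unfolding refl_on_def iso_rel_def using leaf_iso_refl by auto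
  show "sym (iso_rel n)"
    unfolding sym_def iso_rel_def using leaf_iso_sym by (auto simp: ubtrees_def)
  show "trans (iso_rel n)"
    unfolding trans_def iso_rel_def using leaf_iso_trans by blast
  show "iso_rel n \<subseteq> ubtrees n \<times> ubtrees n" unfolding iso_rel_def by auto
qed

lemma relabel_iso:
  assumes "\<sigma> permutes {1..n}" "leaf_iso n G H"
  shows "leaf_iso n (relabel \<sigma> G) (relabel \<sigma> H)"
proof -
  obtain f where f: "bij_betw f (fst G) (fst H)" "\<forall>i\<in>{1..n}. f i = i" "snd H = (\<lambda>e. f ` e) ` snd G"
    using assms(2) unfolding leaf_iso_def by blast
  let ?f = "\<sigma> \<circ> f \<circ> Hilbert_Choice.inv \<sigma>"
  have bs: "bij \<sigma>" using permutes_bij[OF assms(1)] .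
  have isg: "Hilbert_Choice.inv \<sigma> \<circ> \<sigma> = id" using permutes_inv_o(2)[OF assms(1)] .
  have b1: "bij_betw (Hilbert_Choice.inv \<sigma>) (\<sigma> ` fst G) (fst G)"
  proof (rule bij_betw_imageI)
    show "inj_on (Hilbert_Choice.inv \<sigma>) (\<sigma> ` fst G)" using permutes_inj[OF permutes_inv[OF assms(1)]] inj_on_subset by blast
    show "Hilbert_Choice.inv \<sigma> ` \<sigma> ` fst G = fst G" using isg by (simp add: image_comp)
  qed
  have b2: "bij_betw \<sigma> (fst H) (\<sigma> ` fst H)" using bij_betw_subset[OF bs] by blast
  have "bij_betw ?f (\<sigma> ` fst G) (\<sigma> ` fst H)" using bij_betw_trans[OF bij_betw_trans[OF b1 f(1)] b2] by (simp add: comp_assoc)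
  moreover have "\<forall>i\<in>{1..n}. ?f i = i"
  proof
    fix i assume i: "i \<in> {1..n}"
    have "Hilbert_Choice.inv \<sigma> i \<in> {1..n}" using permutes_in_image[OF permutes_inv[OF assms(1)]] i by blast
    thus "?f i = i" using f(2) permutes_inverses(1)[OF assms(1)] by simp
  qed
  moreover have "snd (relabel \<sigma> H) = (\<lambda>e. ?f ` e) ` snd (relabel \<sigma> G)"
  proof -
    have "?f \<circ> \<sigma> = \<sigma> \<circ> f" using isg by (simp add: comp_assoc)
    hence "?f ` \<sigma> ` e = \<sigma> ` f ` e" for e by (metis image_comp)
    thus ?thesis unfolding relabel_def f(3) by (simp add: image_comp)
  qed
  ultimately show ?thesis unfolding leaf_iso_def relabel_def fst_conv by blast
qed




definition cls :: "nat \<Rightarrow> graph \<Rightarrow> graph set" where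
  "cls n G = iso_rel n `` {G}"

definition act :: "(nat \<Rightarrow> nat) \<Rightarrow> graph set \<Rightarrow> graph set" where
  "act \<sigma> C = relabel \<sigma> ` C"

lemma UT_eq: "UT n = cls n ` ubtrees n"
  unfolding UT_def quotient_def cls_def by blast

lemma cls_eq_iff: "G \<in> ubtrees n \<Longrightarrow> H \<in> ubtrees n \<Longrightarrow> cls n G = cls n H \<longleftrightarrow> leaf_iso n G H"
  unfolding cls_def using eq_equiv_class_iff[OF equiv_iso, of G n H] unfolding iso_rel_def by simp

lemma mem_cls: "H \<in> cls n G \<longleftrightarrow> G \<in> ubtrees n \<and> H \<in> ubtrees n \<and> leaf_iso n G H"
  unfolding cls_def iso_rel_def by simp

lemma relabel_cls:
  assumes "\<sigma> permutes {1..n}" "G \<in> ubtrees n"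
  shows "act \<sigma> (cls n G) = cls n (relabel \<sigma> G)"
  unfolding act_def
proof
  show "relabel \<sigma> ` cls n G \<subseteq> cls n (relabel \<sigma> G)"
  proof
    fix K assume "K \<in> relabel \<sigma> ` cls n G"
    then obtain H where H: "H \<in> cls n G" "K = relabel \<sigma> H" by blast
    hence H': "H \<in> ubtrees n" "leaf_iso n G H" by (simp_all add: mem_cls)
    show "K \<in> cls n (relabel \<sigma> G)" unfolding mem_cls H(2)
      using relabel_ub[OF assms(1) assms(2)] relabel_ub[OF assms(1) H'(1)] relabel_iso[OF assms(1) H'(2)] by blast
  qed
  show "cls n (relabel \<sigma> G) \<subseteq> relabel \<sigma> ` cls n G"
  proof
    fix K assume "K \<in> cls n (relabel \<sigma> G)"
    hence K: "K \<in> ubtrees n" "leaf_iso n (relabel \<sigma> G) K" by (auto simp: mem_cls)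
    have ip: "Hilbert_Choice.inv \<sigma> permutes {1..n}" by (rule permutes_inv[OF assms(1)])
    let ?H = "relabel (Hilbert_Choice.inv \<sigma>) K"
    have "relabel \<sigma> ?H = K" by (simp add: relabel_comp permutes_inv_o[OF assms(1)] relabel_id)
    moreover have "relabel (Hilbert_Choice.inv \<sigma>) (relabel \<sigma> G) = G" by (simp add: relabel_comp permutes_inv_o[OF assms(1)] relabel_id)
    hence "leaf_iso n G ?H" using relabel_iso[OF ip K(2)] by simp
    hence "?H \<in> cls n G" using assms(2) relabel_ub[OF ip K(1)] by (simp add: mem_cls)
    ultimately show "K \<in> relabel \<sigma> ` cls n G" by (metis image_eqI)
  qed
qed

lemma act_UT: "\<sigma> permutes {1..n} \<Longrightarrow> C \<in> UT n \<Longrightarrow> act \<sigma> C \<in> UT n"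
  unfolding UT_eq using relabel_cls relabel_ub by auto

lemma act_comp: "act \<sigma> (act \<tau> C) = act (\<sigma> \<circ> \<tau>) C"
  unfolding act_def by (simp add: image_comp relabel_comp comp_def)

lemma act_id: "act id C = C"
  unfolding act_def by (simp add: relabel_id)

lemma fix_count_eq:
  assumes "\<sigma> permutes {1..n}"
  shows "fix_count n \<sigma> = card {C \<in> UT n. act \<sigma> C = C}"
proof -
  have "(\<forall>G\<in>C. relabel \<sigma> G \<in> C) \<longleftrightarrow> act \<sigma> C = C" if C: "C \<in> UT n" for C
  proof
    assume h: "\<forall>G\<in>C. relabel \<sigma> G \<in> C"
    obtain G where G: "G \<in> ubtrees n" "C = cls n G" using C UT_eq by auto
    have "G \<in> C" using G by (simp add: mem_cls leaf_iso_refl)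
    hence "relabel \<sigma> G \<in> cls n G" using h G by simp
    hence "cls n (relabel \<sigma> G) = cls n G"
      using cls_eq_iff[OF relabel_ub[OF assms G(1)] G(1)] leaf_iso_sym by (auto simp: mem_cls ubtrees_def)
    thus "act \<sigma> C = C" using relabel_cls[OF assms G(1)] G(2) by simp
  next
    assume "act \<sigma> C = C"
    thus "\<forall>G\<in>C. relabel \<sigma> G \<in> C" unfolding act_def by blast
  qed
  thus ?thesis unfolding fix_count_def by (metis (lifting) mem_Collect_eq)
qed

lemma handshake:
  assumes "is_ubtree n G"
  shows "(\<Sum>v\<in>fst G. deg G v) = 2 * card (snd G)"
proof -
  let ?V = "fst G" and ?E = "snd G"
  have fV: "finite ?V" using assms unfolding is_ubtree_def by blast
  have Ep: "?E \<subseteq> {e. \<exists>u v. e = {u, v} \<and> u \<noteq> v \<and> u \<in> ?V \<and> v \<in> ?V}"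
    using assms unfolding is_ubtree_def by blast
  have fE: "finite ?E" using finite_subset[of ?E "Pow ?V"] Ep fV by blast
  have "(\<Sum>v\<in>?V. deg G v) = (\<Sum>v\<in>?V. \<Sum>e\<in>?E. if v \<in> e then 1 else 0)"
    unfolding deg_def using fE by (simp add: sum.inter_filter[symmetric])
  also have "\<dots> = (\<Sum>e\<in>?E. \<Sum>v\<in>?V. if v \<in> e then 1 else 0)" by (rule sum.swap)
  also have "\<dots> = (\<Sum>e\<in>?E. 2)"
  proof (rule sum.cong[OF refl])
    fix e assume "e \<in> ?E"
    then obtain u v where uv: "e = {u, v}" "u \<noteq> v" "u \<in> ?V" "v \<in> ?V" using Ep by blast
    have "(\<Sum>x\<in>?V. if x \<in> e then 1 else 0) = card {x \<in> ?V. x \<in> e}"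
      using fV by (simp add: sum.inter_filter[symmetric])
    also have "{x \<in> ?V. x \<in> e} = {u, v}" using uv by auto
    finally show "(\<Sum>x\<in>?V. if x \<in> e then 1 else 0) = (2::nat)" using uv by simp
  qed
  finally show ?thesis by simp
qed

lemma ub_internal:
  assumes "is_ubtree n G"
  shows "card (fst G - {1..n}) + 2 = n"
proof -
  let ?V = "fst G" and ?E = "snd G"
  have fV: "finite ?V" and c2: "card ?V \<ge> 2" and cE: "card ?E + 1 = card ?V" and sub: "{1..n} \<subseteq> ?V"
    and dg: "\<forall>v\<in>?V. (v \<in> {1..n} \<longrightarrow> deg G v = 1) \<and> (v \<notin> {1..n} \<longrightarrow> deg G v = 3)"
    using assms unfolding is_ubtree_def by auto
  let ?m = "card (?V - {1..n})"
  have cV: "card ?V = ?m + n" using card_Diff_subset[OF _ sub] card_mono[OF fV sub] by simp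
  have "(\<Sum>v\<in>?V. deg G v) = (\<Sum>v\<in>?V - {1..n}. deg G v) + (\<Sum>v\<in>{1..n}. deg G v)"
    by (rule sum.subset_diff[OF sub fV])
  also have "(\<Sum>v\<in>?V - {1..n}. deg G v) = (\<Sum>v\<in>?V - {1..n}. 3)" using dg by (intro sum.cong) auto
  also have "(\<Sum>v\<in>{1..n}. deg G v) = (\<Sum>v\<in>{1..n}. 1)" using dg sub by (intro sum.cong) auto
  finally have "3 * ?m + n = 2 * card ?E" using handshake[OF assms] by simp
  thus ?thesis using cE cV c2 by linarith
qed

lemma small_rep:
  assumes G: "G \<in> ubtrees n"
  shows "\<exists>H\<in>ubtrees n. fst H \<subseteq> {1..2*n} \<and> leaf_iso n G H"
proof -
  have ub: "is_ubtree n G" using G by (simp add: ubtrees_def)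
  let ?V = "fst G" and ?I = "fst G - {1..n}"
  have fV: "finite ?V" and sub: "{1..n} \<subseteq> ?V" using ub unfolding is_ubtree_def by auto
  let ?m = "card ?I"
  have m: "?m + 2 = n" by (rule ub_internal[OF ub])
  obtain g where g: "bij_betw g ?I {n+1..n+?m}"
    using finite_same_card_bij[of ?I "{n+1..n+?m}"] fV by auto
  define h where "h x = (if x \<in> {1..n} then x else g x)" for x
  have gI: "g x \<in> {n+1..n+?m}" if "x \<in> ?I" for x using g that bij_betwE by blast
  have inj: "inj_on h ?V"
  proof (rule inj_onI)
    fix x y assume xy: "x \<in> ?V" "y \<in> ?V" "h x = h y"
    show "x = y"
    proof (cases "x \<in> {1..n}"; cases "y \<in> {1..n}")
      assume "x \<notin> {1..n}" "y \<notin> {1..n}"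
      thus "x = y" using xy g unfolding h_def bij_betw_def inj_on_def by auto
    qed (use xy gI in \<open>fastforce simp: h_def\<close>)+
  qed
  have lv: "\<forall>v\<in>?V. (h v \<in> {1..n} \<longleftrightarrow> v \<in> {1..n})"
  proof
    fix v assume v: "v \<in> ?V"
    show "h v \<in> {1..n} \<longleftrightarrow> v \<in> {1..n}"
    proof (cases "v \<in> {1..n}")
      case False
      hence "g v \<in> {n+1..n+?m}" using gI v by blast
      thus ?thesis using False by (simp add: h_def)
    qed (simp add: h_def)
  qed
  have cov: "{1..n} \<subseteq> h ` ?V"
  proof
    fix i assume "i \<in> {1..n}"
    hence "h i = i" "i \<in> ?V" using sub by (auto simp: h_def)
    thus "i \<in> h ` ?V" by (metis image_eqI)
  qed
  let ?H = "mapG h G"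
  have Hub: "?H \<in> ubtrees n" using ub_map[OF ub inj lv cov] by (simp add: ubtrees_def)
  have "fst ?H \<subseteq> {1..2*n}"
  proof
    fix w assume "w \<in> fst ?H"
    then obtain v where v: "v \<in> ?V" "w = h v" by (auto simp: mapG_def)
    show "w \<in> {1..2*n}"
    proof (cases "v \<in> {1..n}")
      case False
      hence "g v \<in> {n+1..n+?m}" using gI v by blast
      thus ?thesis using False v m by (simp add: h_def)
    qed (use v in \<open>simp add: h_def\<close>)
  qed
  moreover have "leaf_iso n G ?H" unfolding leaf_iso_def
  proof (rule exI[of _ h], intro conjI)
    show "bij_betw h ?V (fst ?H)" unfolding mapG_def using inj by (simp add: bij_betw_imageI)
    show "\<forall>i\<in>{1..n}. h i = i" by (simp add: h_def)
    show "snd ?H = (\<lambda>e. h ` e) ` snd G" by (simp add: mapG_def)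
  qed
  ultimately show ?thesis using Hub by blast
qed

lemma finite_UT: "finite (UT n)"
proof -
  let ?S = "{H \<in> ubtrees n. fst H \<subseteq> {1..2*n}}"
  have "?S \<subseteq> Pow {1..2*n} \<times> Pow (Pow {1..2*n})"
  proof
    fix H assume H: "H \<in> ?S"
    hence "snd H \<subseteq> Pow (fst H)" using edge_sub[of n H] by (auto simp: ubtrees_def)
    thus "H \<in> Pow {1..2*n} \<times> Pow (Pow {1..2*n})" using H by (cases H) auto
  qed
  hence fS: "finite ?S" by (rule finite_subset) simp
  have "UT n \<subseteq> cls n ` ?S"
  proof
    fix C assume "C \<in> UT n"
    then obtain G where G: "G \<in> ubtrees n" "C = cls n G" using UT_eq by auto
    obtain H where H: "H \<in> ubtrees n" "fst H \<subseteq> {1..2*n}" "leaf_iso n G H" using small_rep[OF G(1)] by blast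
    have "C = cls n H" using G cls_eq_iff[OF G(1) H(1)] H(3) by simp
    thus "C \<in> cls n ` ?S" using H by blast
  qed
  thus ?thesis using fS finite_surj by blast
qed




definition Fx :: "nat \<Rightarrow> (nat \<Rightarrow> nat) \<Rightarrow> graph set set" where
  "Fx n \<sigma> = {C \<in> UT n. act \<sigma> C = C}"

lemma fix_conj_gen:
  assumes s: "\<sigma> permutes {1..n}" and t: "\<tau> permutes {1..n}" and p: "\<pi> permutes {1..n}"
    and c: "\<tau> \<circ> \<pi> = \<pi> \<circ> \<sigma>"
  shows "fix_count n \<sigma> = fix_count n \<tau>"
proof -
  let ?r = "Hilbert_Choice.inv \<pi>"
  have r: "?r permutes {1..n}" by (rule permutes_inv[OF p])
  have pr: "\<pi> (?r x) = x" "?r (\<pi> x) = x" for x using permutes_inverses[OF p] by auto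
  have c2: "\<sigma> \<circ> ?r = ?r \<circ> \<tau>"
  proof
    fix x
    have "\<pi> (\<sigma> (?r x)) = \<tau> (\<pi> (?r x))" using fun_cong[OF c, of "?r x"] by simp
    hence "\<pi> (\<sigma> (?r x)) = \<pi> (?r (\<tau> x))" using pr by simp
    hence "\<sigma> (?r x) = ?r (\<tau> x)" using permutes_inj[OF p] by (simp add: inj_eq)
    thus "(\<sigma> \<circ> ?r) x = (?r \<circ> \<tau>) x" by simp
  qed
  have rp: "?r \<circ> \<pi> = id" "\<pi> \<circ> ?r = id" using pr by auto
  have "bij_betw (act \<pi>) (Fx n \<sigma>) (Fx n \<tau>)"
  proof (rule bij_betw_byWitness[where f' = "act ?r"])
    show "\<forall>a\<in>Fx n \<sigma>. act ?r (act \<pi> a) = a" by (simp add: act_comp rp act_id)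
    show "\<forall>a\<in>Fx n \<tau>. act \<pi> (act ?r a) = a" by (simp add: act_comp rp act_id)
    show "act \<pi> ` Fx n \<sigma> \<subseteq> Fx n \<tau>"
    proof
      fix D assume "D \<in> act \<pi> ` Fx n \<sigma>"
      then obtain C where C: "C \<in> UT n" "act \<sigma> C = C" "D = act \<pi> C" unfolding Fx_def by blast
      have "act \<tau> D = act \<pi> (act \<sigma> C)" unfolding C(3) act_comp c ..
      thus "D \<in> Fx n \<tau>" using C act_UT[OF p] unfolding Fx_def by simp
    qed
    show "act ?r ` Fx n \<tau> \<subseteq> Fx n \<sigma>"
    proof
      fix D assume "D \<in> act ?r ` Fx n \<tau>"
      then obtain C where C: "C \<in> UT n" "act \<tau> C = C" "D = act ?r C" unfolding Fx_def by blast
      have "act \<sigma> D = act ?r (act \<tau> C)" unfolding C(3) act_comp c2 ..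
      thus "D \<in> Fx n \<sigma>" using C act_UT[OF r] unfolding Fx_def by simp
    qed
  qed
  hence "card (Fx n \<sigma>) = card (Fx n \<tau>)" by (rule bij_betw_same_card)
  thus ?thesis using fix_count_eq[OF s] fix_count_eq[OF t] unfolding Fx_def by simp
qed

lemma perm_of_type_spec:
  assumes "\<sigma> permutes {1..n}"
  shows "perm_of_type n (cycle_type n \<sigma>) permutes {1..n} \<and> cycle_type n (perm_of_type n (cycle_type n \<sigma>)) = cycle_type n \<sigma>"
  unfolding perm_of_type_def by (rule someI[of _ \<sigma>]) (intro conjI assms refl)

lemma u_num_ct:
  assumes s: "\<sigma> permutes {1..n}"
  shows "u_num n (cycle_type n \<sigma>) = fix_count n \<sigma>"
    and "u_num n (sq_type n (cycle_type n \<sigma>)) = fix_count n (\<sigma> \<circ> \<sigma>)"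
proof -
  let ?p = "perm_of_type n (cycle_type n \<sigma>)"
  have p: "?p permutes {1..n}" "cycle_type n ?p = cycle_type n \<sigma>" using perm_of_type_spec[OF s] by auto
  obtain \<pi> where pi: "\<pi> permutes {1..n}" "?p \<circ> \<pi> = \<pi> \<circ> \<sigma>"
    using conj_perm[OF s p(1) _] p(2) by (auto simp: cycle_type_ctype)
  show "u_num n (cycle_type n \<sigma>) = fix_count n \<sigma>"
    unfolding u_num_def using fix_conj_gen[OF s p(1) pi] by simp
  have pp: "?p \<circ> ?p permutes {1..n}" by (rule permutes_compose[OF p(1) p(1)])
  have ss: "\<sigma> \<circ> \<sigma> permutes {1..n}" by (rule permutes_compose[OF s s])
  have "(?p \<circ> ?p) \<circ> \<pi> = \<pi> \<circ> (\<sigma> \<circ> \<sigma>)"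
    by (metis (no_types, lifting) comp_assoc pi(2))
  hence e1: "fix_count n (\<sigma> \<circ> \<sigma>) = fix_count n (?p \<circ> ?p)" using fix_conj_gen[OF ss pp pi(1)] by simp
  let ?q = "perm_of_type n (cycle_type n (?p \<circ> ?p))"
  have q: "?q permutes {1..n}" "cycle_type n ?q = cycle_type n (?p \<circ> ?p)" using perm_of_type_spec[OF pp] by auto
  obtain \<pi>' where pi': "\<pi>' permutes {1..n}" "?q \<circ> \<pi>' = \<pi>' \<circ> (?p \<circ> ?p)"
    using conj_perm[OF pp q(1) _] q(2) by (auto simp: cycle_type_ctype)
  have "fix_count n ?q = fix_count n (?p \<circ> ?p)" using fix_conj_gen[OF pp q(1) pi'] by simp
  thus "u_num n (sq_type n (cycle_type n \<sigma>)) = fix_count n (\<sigma> \<circ> \<sigma>)"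
    unfolding u_num_def sq_type_def using e1 by simp
qed

lemma size_le_sum:
  assumes "\<forall>i\<in>#(M::nat multiset). i > 0"
  shows "size M \<le> sum_mset M"
  using assms by (induction M) auto

lemma finite_partitions: "finite (partitions n)"
proof -
  have "partitions n \<subseteq> mset ` {xs. set xs \<subseteq> {1..n} \<and> length xs \<le> n}"
  proof
    fix lam assume "lam \<in> partitions n"
    hence l: "\<forall>i\<in>#lam. i > 0" "sum_mset lam = n" unfolding partitions_def by auto
    obtain xs where xs: "lam = mset xs" using ex_mset[of lam] by metis
    have "set xs \<subseteq> {1..n}" using l mem_le_sum xs by fastforce
    moreover have "length xs \<le> n" using size_le_sum[OF l(1)] l(2) xs by simp
    ultimately show "lam \<in> mset ` {xs. set xs \<subseteq> {1..n} \<and> length xs \<le> n}" using xs by blast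
  qed
  thus ?thesis using finite_lists_length_le[of "{1..n}" n] finite_surj by blast
qed

lemma ct_partition:
  assumes "\<sigma> permutes {1..n}"
  shows "cycle_type n \<sigma> \<in> partitions n"
  using ctype_part[OF assms] unfolding partitions_def cycle_type_ctype by simp

lemma card_cS_real:
  assumes "lam \<in> partitions n"
  shows "real (card (cS {1..n} lam)) = fact n / real (z_num lam)"
proof -
  have l: "\<forall>i\<in>#lam. i > 0" "sum_mset lam = card {1..n}" using assms unfolding partitions_def by auto
  have e: "card (cS {1..n} lam) * z_num lam = fact n" using count_ctype[OF _ l] by simp
  have "z_num lam > 0" unfolding z_num_def using l(1) by (intro prod_pos) auto
  hence "real (z_num lam) > 0" by simp
  moreover have "real (card (cS {1..n} lam)) * real (z_num lam) = fact n"
    using arg_cong[OF e, of real] by simp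
  ultimately show ?thesis by (simp add: field_simps)
qed

lemma sum_by_type:
  fixes h :: "nat multiset \<Rightarrow> real"
  shows "(\<Sum>\<sigma>\<in>{\<sigma>. \<sigma> permutes {1..n}}. h (cycle_type n \<sigma>)) =
         (\<Sum>lam\<in>partitions n. fact n / real (z_num lam) * h lam)"
proof -
  have "(\<Sum>\<sigma>\<in>{\<sigma>. \<sigma> permutes {1..n}}. h (cycle_type n \<sigma>)) =
        (\<Sum>lam\<in>partitions n. \<Sum>\<sigma>\<in>{\<sigma> \<in> {\<sigma>. \<sigma> permutes {1..n}}. cycle_type n \<sigma> = lam}. h (cycle_type n \<sigma>))"
    by (rule sum.group[symmetric]) (auto simp: finite_permutations finite_partitions ct_partition)
  also have "\<dots> = (\<Sum>lam\<in>partitions n. real (card (cS {1..n} lam)) * h lam)"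
  proof (rule sum.cong[OF refl])
    fix lam assume "lam \<in> partitions n"
    have "{\<sigma> \<in> {\<sigma>. \<sigma> permutes {1..n}}. cycle_type n \<sigma> = lam} = cS {1..n} lam"
      unfolding cS_def cycle_type_ctype by auto
    thus "(\<Sum>\<sigma>\<in>{\<sigma> \<in> {\<sigma>. \<sigma> permutes {1..n}}. cycle_type n \<sigma> = lam}. h (cycle_type n \<sigma>)) = real (card (cS {1..n} lam)) * h lam"
      by (simp add: cS_def cycle_type_ctype)
  qed
  also have "\<dots> = (\<Sum>lam\<in>partitions n. fact n / real (z_num lam) * h lam)"
    by (rule sum.cong[OF refl]) (subst card_cS_real, auto)
  finally show ?thesis .
qed




lemma mk_action:
  fixes G :: "('g, 'm) monoid_scheme" and \<psi> :: "'g \<Rightarrow> 'x \<Rightarrow> 'x"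
  assumes grp: "group G" and cl: "\<And>g x. g \<in> carrier G \<Longrightarrow> x \<in> E \<Longrightarrow> \<psi> g x \<in> E"
    and mul: "\<And>g h x. g \<in> carrier G \<Longrightarrow> h \<in> carrier G \<Longrightarrow> x \<in> E \<Longrightarrow> \<psi> (g \<otimes>\<^bsub>G\<^esub> h) x = \<psi> g (\<psi> h x)"
    and one: "\<And>x. x \<in> E \<Longrightarrow> \<psi> \<one>\<^bsub>G\<^esub> x = x"
  shows "group_action G E (\<lambda>g. restrict (\<psi> g) E)"
proof -
  have bij: "restrict (\<psi> g) E \<in> Bij E" if g: "g \<in> carrier G" for g
  proof -
    have ig: "inv\<^bsub>G\<^esub> g \<in> carrier G" using group.inv_closed[OF grp g] .
    have "bij_betw (\<psi> g) E E"
    proof (rule bij_betw_byWitness[where f' = "\<psi> (inv\<^bsub>G\<^esub> g)"])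
      show "\<forall>a\<in>E. \<psi> (inv\<^bsub>G\<^esub> g) (\<psi> g a) = a"
        using mul[OF ig g] one group.l_inv[OF grp g] by metis
      show "\<forall>a\<in>E. \<psi> g (\<psi> (inv\<^bsub>G\<^esub> g) a) = a"
        using mul[OF g ig] one group.r_inv[OF grp g] by metis
      show "\<psi> g ` E \<subseteq> E" using cl[OF g] by blast
      show "\<psi> (inv\<^bsub>G\<^esub> g) ` E \<subseteq> E" using cl[OF ig] by blast
    qed
    hence "bij_betw (restrict (\<psi> g) E) E E" by (rule iffD1[OF bij_betw_cong, rotated]) simp
    thus ?thesis unfolding Bij_def by simp
  qed
  have hom: "(\<lambda>g. restrict (\<psi> g) E) \<in> hom G (BijGroup E)"
  proof (rule homI)
    fix g assume "g \<in> carrier G"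
    thus "restrict (\<psi> g) E \<in> carrier (BijGroup E)" using bij by (simp add: BijGroup_def)
  next
    fix g h assume g: "g \<in> carrier G" and h: "h \<in> carrier G"
    have "restrict (\<psi> g) E \<otimes>\<^bsub>BijGroup E\<^esub> restrict (\<psi> h) E = compose E (restrict (\<psi> g) E) (restrict (\<psi> h) E)"
      using bij[OF g] bij[OF h] by (simp add: BijGroup_def)
    also have "\<dots> = restrict (\<psi> (g \<otimes>\<^bsub>G\<^esub> h)) E"
      unfolding compose_def using cl[OF h] mul[OF g h] by (intro restrict_ext) simp
    finally show "restrict (\<psi> (g \<otimes>\<^bsub>G\<^esub> h)) E = restrict (\<psi> g) E \<otimes>\<^bsub>BijGroup E\<^esub> restrict (\<psi> h) E" by simp
  qed
  show ?thesis unfolding group_action_def group_hom_def group_hom_axioms_def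
    using grp group_BijGroup hom by blast
qed

lemma burnside_gen:
  fixes G :: "('g, 'm) monoid_scheme" and \<psi> :: "'g \<Rightarrow> 'x \<Rightarrow> 'x"
  assumes grp: "group G" and cl: "\<And>g x. g \<in> carrier G \<Longrightarrow> x \<in> E \<Longrightarrow> \<psi> g x \<in> E"
    and mul: "\<And>g h x. g \<in> carrier G \<Longrightarrow> h \<in> carrier G \<Longrightarrow> x \<in> E \<Longrightarrow> \<psi> (g \<otimes>\<^bsub>G\<^esub> h) x = \<psi> g (\<psi> h x)"
    and one: "\<And>x. x \<in> E \<Longrightarrow> \<psi> \<one>\<^bsub>G\<^esub> x = x"
    and fG: "finite (carrier G)" and fE: "finite E"
  shows "card (E // {(x, y). x \<in> E \<and> (\<exists>g\<in>carrier G. \<psi> g x = y)}) * order G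
         = (\<Sum>g\<in>carrier G. card {x \<in> E. \<psi> g x = x})"
proof -
  let ?phi = "\<lambda>g. restrict (\<psi> g) E"
  let ?S = "{(x, y). x \<in> E \<and> (\<exists>g\<in>carrier G. \<psi> g x = y)}"
  have ga: "group_action G E ?phi" by (rule mk_action[OF grp cl mul one])
  have "orbits G E ?phi = E // ?S"
    unfolding orbits_def orbit_def quotient_def by auto
  moreover have "invariants E ?phi g = {x \<in> E. \<psi> g x = x}" for g
    unfolding invariants_def by auto
  ultimately show ?thesis using group_action.burnside[OF ga fG fE] by simp
qed

lemma card_quot_transfer:
  assumes q: "q ` A = B" and R: "R \<subseteq> A \<times> A" and S: "S \<subseteq> B \<times> B"
    and rel: "\<And>x y. x \<in> A \<Longrightarrow> y \<in> A \<Longrightarrow> (x, y) \<in> R \<longleftrightarrow> (q x, q y) \<in> S"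
  shows "card (A // R) = card (B // S)"
proof -
  let ?f = "\<lambda>X. {x \<in> A. q x \<in> X}"
  have img: "?f (S `` {q x0}) = R `` {x0}" if x0: "x0 \<in> A" for x0
    using rel[OF x0] R by auto
  have "bij_betw ?f (B // S) (A // R)"
    unfolding bij_betw_def
  proof
    show "inj_on ?f (B // S)"
    proof (rule inj_onI)
      fix X Y assume X: "X \<in> B // S" and Y: "Y \<in> B // S" and e: "?f X = ?f Y"
      have "X \<subseteq> B" "Y \<subseteq> B" using X Y S unfolding quotient_def by auto
      hence "X = q ` ?f X" "Y = q ` ?f Y" using q by auto
      thus "X = Y" using e by simp
    qed
    show "?f ` (B // S) = A // R"
    proof
      show "?f ` (B // S) \<subseteq> A // R"
      proof
        fix Z assume "Z \<in> ?f ` (B // S)"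
        then obtain b where b: "b \<in> B" "Z = ?f (S `` {b})" unfolding quotient_def by auto
        then obtain x0 where x0: "x0 \<in> A" "b = q x0" using q by auto
        have "Z = R `` {x0}" using img[OF x0(1)] b(2) x0(2) by simp
        thus "Z \<in> A // R" using quotientI[OF x0(1)] by simp
      qed
      show "A // R \<subseteq> ?f ` (B // S)"
      proof
        fix Z assume "Z \<in> A // R"
        then obtain x0 where x0: "x0 \<in> A" "Z = R `` {x0}" unfolding quotient_def by auto
        have qx: "q x0 \<in> B" using x0 q by auto
        have m: "S `` {q x0} \<in> B // S" using quotientI[OF qx] .
        have "Z = ?f (S `` {q x0})" using img[OF x0(1)] x0(2) by simp
        thus "Z \<in> ?f ` (B // S)" by (rule rev_image_eqI[OF m])
      qed
    qed
  qed
  thus ?thesis by (rule bij_betw_same_card[symmetric])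
qed

lemma act_cls_eq:
  assumes "\<sigma> permutes {1..n}" "G \<in> ubtrees n" "H \<in> ubtrees n"
  shows "act \<sigma> (cls n G) = cls n H \<longleftrightarrow> leaf_iso n (relabel \<sigma> G) H"
  unfolding relabel_cls[OF assms(1,2)] using cls_eq_iff[OF relabel_ub[OF assms(1,2)] assms(3)] .

lemma cls_UT: "G \<in> ubtrees n \<Longrightarrow> cls n G \<in> UT n"
  unfolding UT_eq by blast

definition z2 :: "bool monoid" where
  "z2 = \<lparr>carrier = UNIV, mult = (\<lambda>a b. a \<noteq> b), one = False\<rparr>"

lemma z2_group: "group z2"
  by (rule groupI) (auto simp: z2_def)

lemma order_sym: "order (sym_group n) = fact n"
  unfolding order_def sym_group_def using card_permutations[of "{1..n}" n] by simp


lemma sym_carrier: "carrier (sym_group n) = {\<sigma>. \<sigma> permutes {1..n}}"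
  by (simp add: sym_group_def)

lemma q_image: "(\<lambda>x. (cls n (fst x), cls n (snd x))) ` (ubtrees n \<times> ubtrees n) = UT n \<times> UT n"
  unfolding UT_eq by force

lemma fix_sq_count:
  assumes "\<sigma> permutes {1..n}"
  shows "card (Fx n \<sigma> \<times> Fx n \<sigma>) = fix_count n \<sigma> ^ 2"
  using fix_count_eq[OF assms] unfolding Fx_def by (simp add: card_cartesian_product power2_eq_square)

lemma swap_count:
  assumes s: "\<sigma> permutes {1..n}"
  shows "card {x \<in> UT n \<times> UT n. (act \<sigma> (snd x), act \<sigma> (fst x)) = x} = fix_count n (\<sigma> \<circ> \<sigma>)"
proof -
  have ss: "\<sigma> \<circ> \<sigma> permutes {1..n}" by (rule permutes_compose[OF s s])
  have eq: "{x \<in> UT n \<times> UT n. (act \<sigma> (snd x), act \<sigma> (fst x)) = x} = (\<lambda>C. (C, act \<sigma> C)) ` Fx n (\<sigma> \<circ> \<sigma>)"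
  proof (intro equalityI subsetI)
    fix x assume x: "x \<in> {x \<in> UT n \<times> UT n. (act \<sigma> (snd x), act \<sigma> (fst x)) = x}"
    obtain C1 C2 where c: "x = (C1, C2)" by (cases x)
    have h: "C1 \<in> UT n" "act \<sigma> C2 = C1" "act \<sigma> C1 = C2" using x c by auto
    have "C1 \<in> Fx n (\<sigma> \<circ> \<sigma>)" unfolding Fx_def using h by (simp add: act_comp[symmetric])
    moreover have "x = (C1, act \<sigma> C1)" using c h by simp
    ultimately show "x \<in> (\<lambda>C. (C, act \<sigma> C)) ` Fx n (\<sigma> \<circ> \<sigma>)" by blast
  next
    fix x assume "x \<in> (\<lambda>C. (C, act \<sigma> C)) ` Fx n (\<sigma> \<circ> \<sigma>)"
    then obtain C where C: "C \<in> UT n" "act (\<sigma> \<circ> \<sigma>) C = C" "x = (C, act \<sigma> C)" unfolding Fx_def by blast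
    have "act \<sigma> (act \<sigma> C) = C" using C(2) by (simp add: act_comp)
    thus "x \<in> {x \<in> UT n \<times> UT n. (act \<sigma> (snd x), act \<sigma> (fst x)) = x}" using C act_UT[OF s] by simp
  qed
  have "card ((\<lambda>C. (C, act \<sigma> C)) ` Fx n (\<sigma> \<circ> \<sigma>)) = card (Fx n (\<sigma> \<circ> \<sigma>))"
    by (rule card_image) (auto simp: inj_on_def)
  thus ?thesis unfolding eq using fix_count_eq[OF ss] unfolding Fx_def by simp
qed

lemma ordered_burnside:
  "num_tanglegrams n * fact n = (\<Sum>\<sigma>\<in>{\<sigma>. \<sigma> permutes {1..n}}. fix_count n \<sigma> ^ 2)"
proof -
  let ?E = "UT n \<times> UT n"
  let ?psi = "\<lambda>\<sigma> x. (act \<sigma> (fst x), act \<sigma> (snd x))"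
  let ?S = "{(x, y). x \<in> ?E \<and> (\<exists>g\<in>carrier (sym_group n). ?psi g x = y)}"
  have B: "card (?E // ?S) * order (sym_group n) = (\<Sum>g\<in>carrier (sym_group n). card {x \<in> ?E. ?psi g x = x})"
  proof (rule burnside_gen)
    show "group (sym_group n)" by (rule sym_group_is_group)
    show "?psi g x \<in> ?E" if "g \<in> carrier (sym_group n)" "x \<in> ?E" for g x
      using that act_UT by (auto simp: sym_carrier)
    show "?psi (g \<otimes>\<^bsub>sym_group n\<^esub> h) x = ?psi g (?psi h x)" for g h x
      by (simp add: sym_group_def act_comp)
    show "?psi \<one>\<^bsub>sym_group n\<^esub> x = x" for x by (simp add: sym_group_def act_id)
    show "finite (carrier (sym_group n))" by (simp add: sym_carrier finite_permutations)
    show "finite ?E" by (simp add: finite_UT)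
  qed
  have Q: "num_tanglegrams n = card (?E // ?S)"
    unfolding num_tanglegrams_def
  proof (rule card_quot_transfer[OF q_image])
    show "tangle_rel n \<subseteq> (ubtrees n \<times> ubtrees n) \<times> (ubtrees n \<times> ubtrees n)"
      unfolding tangle_rel_def by auto
    show "?S \<subseteq> ?E \<times> ?E" using act_UT by (auto simp: sym_carrier)
    fix x y assume x: "x \<in> ubtrees n \<times> ubtrees n" and y: "y \<in> ubtrees n \<times> ubtrees n"
    obtain G1 G2 H1 H2 where xy: "x = (G1, G2)" "y = (H1, H2)" by (cases x, cases y) auto
    have u: "G1 \<in> ubtrees n" "G2 \<in> ubtrees n" "H1 \<in> ubtrees n" "H2 \<in> ubtrees n" using x y xy by auto
    have qx: "(cls n G1, cls n G2) \<in> ?E" using cls_UT[OF u(1)] cls_UT[OF u(2)] by simp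
    have "(\<exists>g\<in>carrier (sym_group n). ?psi g (cls n G1, cls n G2) = (cls n H1, cls n H2)) \<longleftrightarrow>
          (\<exists>\<sigma>. \<sigma> permutes {1..n} \<and> leaf_iso n (relabel \<sigma> G1) H1 \<and> leaf_iso n (relabel \<sigma> G2) H2)"
    proof
      assume "\<exists>g\<in>carrier (sym_group n). ?psi g (cls n G1, cls n G2) = (cls n H1, cls n H2)"
      then obtain \<sigma> where s: "\<sigma> permutes {1..n}" "?psi \<sigma> (cls n G1, cls n G2) = (cls n H1, cls n H2)"
        unfolding sym_carrier by auto
      thus "\<exists>\<sigma>. \<sigma> permutes {1..n} \<and> leaf_iso n (relabel \<sigma> G1) H1 \<and> leaf_iso n (relabel \<sigma> G2) H2"
        using act_cls_eq[OF s(1) u(1) u(3)] act_cls_eq[OF s(1) u(2) u(4)] by auto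
    next
      assume "\<exists>\<sigma>. \<sigma> permutes {1..n} \<and> leaf_iso n (relabel \<sigma> G1) H1 \<and> leaf_iso n (relabel \<sigma> G2) H2"
      then obtain \<sigma> where s: "\<sigma> permutes {1..n}" "leaf_iso n (relabel \<sigma> G1) H1" "leaf_iso n (relabel \<sigma> G2) H2" by blast
      hence "?psi \<sigma> (cls n G1, cls n G2) = (cls n H1, cls n H2)"
        using act_cls_eq[OF s(1) u(1) u(3)] act_cls_eq[OF s(1) u(2) u(4)] by simp
      moreover have "\<sigma> \<in> carrier (sym_group n)" using s(1) by (simp add: sym_carrier)
      ultimately show "\<exists>g\<in>carrier (sym_group n). ?psi g (cls n G1, cls n G2) = (cls n H1, cls n H2)" by blast
    qed
    thus "(x, y) \<in> tangle_rel n \<longleftrightarrow> ((cls n (fst x), cls n (snd x)), (cls n (fst y), cls n (snd y))) \<in> ?S"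
      unfolding xy tangle_rel_def using u qx by auto
  qed
  have "(\<Sum>g\<in>carrier (sym_group n). card {x \<in> ?E. ?psi g x = x}) = (\<Sum>\<sigma>\<in>{\<sigma>. \<sigma> permutes {1..n}}. fix_count n \<sigma> ^ 2)"
    unfolding sym_carrier
  proof (rule sum.cong[OF refl])
    fix \<sigma> assume "\<sigma> \<in> {\<sigma>. \<sigma> permutes {1..n}}"
    hence s: "\<sigma> permutes {1..n}" by simp
    have "{x \<in> ?E. ?psi \<sigma> x = x} = Fx n \<sigma> \<times> Fx n \<sigma>" unfolding Fx_def by auto
    thus "card {x \<in> ?E. ?psi \<sigma> x = x} = fix_count n \<sigma> ^ 2" using fix_sq_count[OF s] by simp
  qed
  thus ?thesis using B Q order_sym by simp
qed

lemma unordered_burnside: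
  "num_unordered_tanglegrams n * (2 * fact n) =
     (\<Sum>\<sigma>\<in>{\<sigma>. \<sigma> permutes {1..n}}. fix_count n \<sigma> ^ 2) + (\<Sum>\<sigma>\<in>{\<sigma>. \<sigma> permutes {1..n}}. fix_count n (\<sigma> \<circ> \<sigma>))"
proof -
  let ?G = "sym_group n \<times>\<times> z2"
  let ?E = "UT n \<times> UT n"
  let ?psi = "\<lambda>g x. if snd g then (act (fst g) (snd x), act (fst g) (fst x)) else (act (fst g) (fst x), act (fst g) (snd x))"
  let ?S = "{(x, y). x \<in> ?E \<and> (\<exists>g\<in>carrier ?G. ?psi g x = y)}"
  have cG: "carrier ?G = {\<sigma>. \<sigma> permutes {1..n}} \<times> UNIV" by (simp add: sym_carrier z2_def)
  have B: "card (?E // ?S) * order ?G = (\<Sum>g\<in>carrier ?G. card {x \<in> ?E. ?psi g x = x})"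
  proof (rule burnside_gen)
    show "group ?G" by (rule DirProd_group[OF sym_group_is_group z2_group])
    show "?psi g x \<in> ?E" if "g \<in> carrier ?G" "x \<in> ?E" for g x
      using that act_UT by (auto simp: cG sym_carrier)
    show "?psi (g \<otimes>\<^bsub>?G\<^esub> h) x = ?psi g (?psi h x)" for g h x
      by (cases g, cases h) (auto simp: mult_DirProd' sym_group_def z2_def act_comp)
    show "?psi \<one>\<^bsub>?G\<^esub> x = x" for x by (simp add: sym_group_def z2_def act_id)
    show "finite (carrier ?G)" unfolding cG by (simp add: finite_permutations)
    show "finite ?E" by (simp add: finite_UT)
  qed
  have ord: "order ?G = 2 * fact n"
    unfolding order_def cG using card_permutations[of "{1..n}" n] by (simp add: card_cartesian_product)
  have Q: "num_unordered_tanglegrams n = card (?E // ?S)"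
    unfolding num_unordered_tanglegrams_def
  proof (rule card_quot_transfer[OF q_image])
    show "unordered_tangle_rel n \<subseteq> (ubtrees n \<times> ubtrees n) \<times> (ubtrees n \<times> ubtrees n)"
      unfolding unordered_tangle_rel_def by auto
    show "?S \<subseteq> ?E \<times> ?E" using act_UT by (auto simp: cG sym_carrier)
    fix x y assume x: "x \<in> ubtrees n \<times> ubtrees n" and y: "y \<in> ubtrees n \<times> ubtrees n"
    obtain G1 G2 H1 H2 where xy: "x = (G1, G2)" "y = (H1, H2)" by (cases x, cases y) auto
    have u: "G1 \<in> ubtrees n" "G2 \<in> ubtrees n" "H1 \<in> ubtrees n" "H2 \<in> ubtrees n" using x y xy by auto
    note e = act_cls_eq[OF _ u(1) u(3)] act_cls_eq[OF _ u(2) u(4)] act_cls_eq[OF _ u(1) u(4)] act_cls_eq[OF _ u(2) u(3)]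
    have qx: "(cls n G1, cls n G2) \<in> ?E" using cls_UT[OF u(1)] cls_UT[OF u(2)] by simp
    have "(\<exists>g\<in>carrier ?G. ?psi g (cls n G1, cls n G2) = (cls n H1, cls n H2)) \<longleftrightarrow>
          (\<exists>\<sigma>. \<sigma> permutes {1..n} \<and>
            ((leaf_iso n (relabel \<sigma> G1) H1 \<and> leaf_iso n (relabel \<sigma> G2) H2) \<or>
             (leaf_iso n (relabel \<sigma> G1) H2 \<and> leaf_iso n (relabel \<sigma> G2) H1)))"
    proof
      assume "\<exists>g\<in>carrier ?G. ?psi g (cls n G1, cls n G2) = (cls n H1, cls n H2)"
      then obtain \<sigma> b where g: "\<sigma> permutes {1..n}" "?psi (\<sigma>, b) (cls n G1, cls n G2) = (cls n H1, cls n H2)"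
        unfolding cG by auto
      show "\<exists>\<sigma>. \<sigma> permutes {1..n} \<and>
            ((leaf_iso n (relabel \<sigma> G1) H1 \<and> leaf_iso n (relabel \<sigma> G2) H2) \<or>
             (leaf_iso n (relabel \<sigma> G1) H2 \<and> leaf_iso n (relabel \<sigma> G2) H1))"
        using g e[of \<sigma>] by (cases b) auto
    next
      assume "\<exists>\<sigma>. \<sigma> permutes {1..n} \<and>
            ((leaf_iso n (relabel \<sigma> G1) H1 \<and> leaf_iso n (relabel \<sigma> G2) H2) \<or>
             (leaf_iso n (relabel \<sigma> G1) H2 \<and> leaf_iso n (relabel \<sigma> G2) H1))"
      then obtain \<sigma> where s: "\<sigma> permutes {1..n}" and
        d: "(leaf_iso n (relabel \<sigma> G1) H1 \<and> leaf_iso n (relabel \<sigma> G2) H2) \<or>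
             (leaf_iso n (relabel \<sigma> G1) H2 \<and> leaf_iso n (relabel \<sigma> G2) H1)" by blast
      from d show "\<exists>g\<in>carrier ?G. ?psi g (cls n G1, cls n G2) = (cls n H1, cls n H2)"
      proof
        assume "leaf_iso n (relabel \<sigma> G1) H1 \<and> leaf_iso n (relabel \<sigma> G2) H2"
        hence "?psi (\<sigma>, False) (cls n G1, cls n G2) = (cls n H1, cls n H2)" using s e by simp
        moreover have "(\<sigma>, False) \<in> carrier ?G" using s cG by simp
        ultimately show ?thesis by blast
      next
        assume "leaf_iso n (relabel \<sigma> G1) H2 \<and> leaf_iso n (relabel \<sigma> G2) H1"
        hence "?psi (\<sigma>, True) (cls n G1, cls n G2) = (cls n H1, cls n H2)" using s e by simp
        moreover have "(\<sigma>, True) \<in> carrier ?G" using s cG by simp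
        ultimately show ?thesis by blast
      qed
    qed
    thus "(x, y) \<in> unordered_tangle_rel n \<longleftrightarrow> ((cls n (fst x), cls n (snd x)), (cls n (fst y), cls n (snd y))) \<in> ?S"
      unfolding xy unordered_tangle_rel_def using u qx by auto
  qed
  have "(\<Sum>g\<in>carrier ?G. card {x \<in> ?E. ?psi g x = x}) =
        (\<Sum>\<sigma>\<in>{\<sigma>. \<sigma> permutes {1..n}}. \<Sum>b\<in>UNIV. card {x \<in> ?E. ?psi (\<sigma>, b) x = x})"
    unfolding cG by (subst sum.cartesian_product) (simp add: case_prod_unfold)
  also have "\<dots> = (\<Sum>\<sigma>\<in>{\<sigma>. \<sigma> permutes {1..n}}. fix_count n \<sigma> ^ 2 + fix_count n (\<sigma> \<circ> \<sigma>))"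
  proof (rule sum.cong[OF refl])
    fix \<sigma> assume "\<sigma> \<in> {\<sigma>. \<sigma> permutes {1..n}}"
    hence s: "\<sigma> permutes {1..n}" by simp
    have f: "{x \<in> ?E. ?psi (\<sigma>, False) x = x} = Fx n \<sigma> \<times> Fx n \<sigma>" unfolding Fx_def by auto
    have t: "{x \<in> ?E. ?psi (\<sigma>, True) x = x} = {x \<in> UT n \<times> UT n. (act \<sigma> (snd x), act \<sigma> (fst x)) = x}" by simp
    have "(\<Sum>b\<in>UNIV. card {x \<in> ?E. ?psi (\<sigma>, b) x = x}) = card {x \<in> ?E. ?psi (\<sigma>, False) x = x} + card {x \<in> ?E. ?psi (\<sigma>, True) x = x}"
      by (simp add: UNIV_bool)
    thus "(\<Sum>b\<in>UNIV. card {x \<in> ?E. ?psi (\<sigma>, b) x = x}) = fix_count n \<sigma> ^ 2 + fix_count n (\<sigma> \<circ> \<sigma>)"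
      unfolding f t fix_sq_count[OF s] swap_count[OF s] .
  qed
  finally show ?thesis using B Q ord by (simp add: sum.distrib)
qed


theorem mainTheorem2:
  fixes n :: nat
  assumes "n \<ge> 2"
  shows "real (num_tanglegrams n) =
           (\<Sum>lam\<in>partitions n. real (u_num n lam) ^ 2 / real (z_num lam))
       \<and> real (num_unordered_tanglegrams n) =
           (1/2) * (\<Sum>lam\<in>partitions n. real (u_num n lam) ^ 2 / real (z_num lam))
         + (1/2) * (\<Sum>lam\<in>partitions n. real (u_num n (sq_type n lam)) / real (z_num lam))"
proof -
  let ?P = "{\<sigma>. \<sigma> permutes {1..n}}"
  let ?A = "\<Sum>lam\<in>partitions n. real (u_num n lam) ^ 2 / real (z_num lam)"
  let ?B = "\<Sum>lam\<in>partitions n. real (u_num n (sq_type n lam)) / real (z_num lam)"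
  have fpos: "(fact n :: real) > 0" by simp
  have S1: "(\<Sum>\<sigma>\<in>?P. real (fix_count n \<sigma>) ^ 2) = fact n * ?A"
  proof -
    have "(\<Sum>\<sigma>\<in>?P. real (fix_count n \<sigma>) ^ 2) = (\<Sum>\<sigma>\<in>?P. real (u_num n (cycle_type n \<sigma>)) ^ 2)"
      by (rule sum.cong[OF refl]) (simp add: u_num_ct(1))
    also have "\<dots> = (\<Sum>lam\<in>partitions n. fact n / real (z_num lam) * real (u_num n lam) ^ 2)"
      by (rule sum_by_type)
    also have "\<dots> = fact n * ?A" by (simp add: sum_distrib_left)
    finally show ?thesis .
  qed
  have S2: "(\<Sum>\<sigma>\<in>?P. real (fix_count n (\<sigma> \<circ> \<sigma>))) = fact n * ?B"
  proof -
    have "(\<Sum>\<sigma>\<in>?P. real (fix_count n (\<sigma> \<circ> \<sigma>))) = (\<Sum>\<sigma>\<in>?P. real (u_num n (sq_type n (cycle_type n \<sigma>))))"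
      by (rule sum.cong[OF refl]) (simp add: u_num_ct(2))
    also have "\<dots> = (\<Sum>lam\<in>partitions n. fact n / real (z_num lam) * real (u_num n (sq_type n lam)))"
      by (rule sum_by_type)
    also have "\<dots> = fact n * ?B" by (simp add: sum_distrib_left)
    finally show ?thesis .
  qed
  have O: "real (num_tanglegrams n) * fact n = (\<Sum>\<sigma>\<in>?P. real (fix_count n \<sigma>) ^ 2)"
    using arg_cong[OF ordered_burnside[of n], of real] by simp
  have U: "real (num_unordered_tanglegrams n) * (2 * fact n) =
           (\<Sum>\<sigma>\<in>?P. real (fix_count n \<sigma>) ^ 2) + (\<Sum>\<sigma>\<in>?P. real (fix_count n (\<sigma> \<circ> \<sigma>)))"
    using arg_cong[OF unordered_burnside[of n], of real] by simp
  have r1: "real (num_tanglegrams n) = ?A"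
    using O S1 fpos by (simp add: mult.commute)
  have "real (num_unordered_tanglegrams n) * (2 * fact n) = fact n * (?A + ?B)"
    using U S1 S2 by (simp add: algebra_simps)
  hence "fact n * (real (num_unordered_tanglegrams n) * 2) = fact n * (?A + ?B)" by (simp add: algebra_simps)
  hence "real (num_unordered_tanglegrams n) * 2 = ?A + ?B" using fpos by simp
  hence r2: "real (num_unordered_tanglegrams n) = (1/2) * ?A + (1/2) * ?B" by simp
  show ?thesis using r1 r2 by blast
qed


end
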